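(* Let $I_1=(0,1]$, $I_2=(0,1)$, $I_3=(0,1/2)$. For each $d\in\{1,2,3\}$ and each $\alpha_d\in I_d$ there is a constant $0<C_u^{(d)}<\infty$ depending only on $d$ and $\alpha_d$ such that $$\int_0^t\int_{\mathbb R^d}\big|K^{\mathrm{LKS}}_{s;x}-K^{\mathrm{LKS}}_{s;x+z}\big|^2dx\,ds\le C_u^{(d)}|z|^{2\alpha_d}\big(1\vee\tfrac t4\big)$$ for all $t>0$ and $z\in\mathbb R^d$. The same estimate holds, with possibly different constants, with $K^{\mathrm{LKS}}$ replaced by $K^{\mathrm{SFO}}$.
   Context: $K^{\mathrm{LKS}}_{t;x}=(2\pi)^{-d}\int_{\mathbb R^d}e^{-\frac t8(-2+|\xi|^2)^2}\cos(\xi\cdot x)d\xi$ and $K^{\mathrm{SFO}}_{t;x}=(2\pi)^{-d}\int_{\mathbb R^d}e^{-\frac t8|\xi|^4}\cos(\xi\cdot x)d\xi$, $t>0$. *)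

theory Defs
  imports "HOL-Analysis.Analysis"
begin

text \<open>Kernels on R^d, with R^d rendered as a Euclidean space 'a of dimension d = DIM('a).
  The Fourier-type integrals are Lebesgue integrals over lborel.\<close>

definition K_LKS :: "real \<Rightarrow> 'a::euclidean_space \<Rightarrow> real" where
  "K_LKS t x = (2 * pi) powr (- real DIM('a)) *
     (\<integral>\<xi>. exp (- (t / 8) * (-2 + (norm \<xi>)\<^sup>2)\<^sup>2) * cos (\<xi> \<bullet> x) \<partial>lborel)"

definition K_SFO :: "real \<Rightarrow> 'a::euclidean_space \<Rightarrow> real" where
  "K_SFO t x = (2 * pi) powr (- real DIM('a)) *
     (\<integral>\<xi>. exp (- (t / 8) * (norm \<xi>) ^ 4) * cos (\<xi> \<bullet> x) \<partial>lborel)"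

definition alpha_range :: "nat \<Rightarrow> real \<Rightarrow> bool" where
  "alpha_range d \<alpha> =
     ((d = 1 \<and> 0 < \<alpha> \<and> \<alpha> \<le> 1) \<or> (d = 2 \<and> 0 < \<alpha> \<and> \<alpha> < 1) \<or> (d = 3 \<and> 0 < \<alpha> \<and> \<alpha> < 1/2))"

end

theory Submission
  imports Defs "HOL-Probability.Characteristic_Functions"
begin


definition gam :: "real \<Rightarrow> real \<Rightarrow> real" where
  "gam \<sigma> y = exp (- y\<^sup>2 / (2 * \<sigma>\<^sup>2))"

lemma gam_measurable[measurable]: "gam \<sigma> \<in> borel_measurable borel"
  unfolding gam_def by measurable

lemma gam_nonneg: "0 \<le> gam \<sigma> y" by (simp add: gam_def)

lemma gam_eq_normal: "\<sigma> > 0 \<Longrightarrow> gam \<sigma> y = sqrt (2 * pi * \<sigma>\<^sup>2) * normal_density 0 \<sigma> y"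
  by (simp add: gam_def normal_density_def)

lemma integrable_gam: "\<sigma> > 0 \<Longrightarrow> integrable lborel (gam \<sigma>)"
proof -
  assume s: "\<sigma> > 0"
  have "gam \<sigma> = (\<lambda>y. sqrt (2 * pi * \<sigma>\<^sup>2) * normal_density 0 \<sigma> y)"
    using s by (auto simp: fun_eq_iff gam_eq_normal)
  then show ?thesis using Distributions.integrable_normal_density[OF s, of 0] by simp
qed

lemma integral_gam: "\<sigma> > 0 \<Longrightarrow> (\<integral>y. gam \<sigma> y \<partial>lborel) = \<sigma> * sqrt (2 * pi)"
  by (subst gam_eq_normal) (auto simp: real_sqrt_mult)

lemma integrable_gam_iexp: "\<sigma> > 0 \<Longrightarrow> integrable lborel (\<lambda>y. gam \<sigma> y *\<^sub>R iexp (\<zeta> * y))"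
  by (rule Bochner_Integration.integrable_bound[OF integrable_gam[of \<sigma>]])
     (auto simp: norm_mult gam_nonneg)

lemma gam_char:
  assumes s: "\<sigma> > 0"
  shows "(\<integral>y. gam \<sigma> y *\<^sub>R iexp (\<zeta> * y) \<partial>lborel) = complex_of_real (\<sigma> * sqrt (2 * pi) * exp (- (\<sigma> * \<zeta>)\<^sup>2 / 2))"
proof -
  have "char std_normal_distribution (\<sigma> * \<zeta>) = complex_of_real (exp (- (\<sigma> * \<zeta>)\<^sup>2 / 2))"
    by (simp add: char_std_normal_distribution)
  moreover have "char std_normal_distribution (\<sigma> * \<zeta>) = (\<integral>x. std_normal_density x *\<^sub>R iexp (\<sigma> * \<zeta> * x) \<partial>lborel)"
    unfolding char_def by (subst integral_density) auto
  moreover have "(\<integral>y. gam \<sigma> y *\<^sub>R iexp (\<zeta> * y) \<partial>lborel) = \<sigma> *\<^sub>R (\<integral>x. gam \<sigma> (0 + \<sigma> * x) *\<^sub>R iexp (\<zeta> * (0 + \<sigma> * x)) \<partial>lborel)"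
    using lborel_integral_real_affine[of \<sigma> "\<lambda>y. gam \<sigma> y *\<^sub>R iexp (\<zeta> * y)" 0] s by simp
  moreover have "(\<lambda>x. gam \<sigma> (0 + \<sigma> * x) *\<^sub>R iexp (\<zeta> * (0 + \<sigma> * x))) = (\<lambda>x. sqrt (2*pi) *\<^sub>R (std_normal_density x *\<^sub>R iexp (\<sigma> * \<zeta> * x)))"
    using s by (auto simp: fun_eq_iff gam_def std_normal_density_def power_mult_distrib mult_ac)
  moreover have "(\<integral>x. sqrt (2*pi) *\<^sub>R (std_normal_density x *\<^sub>R iexp (\<sigma> * \<zeta> * x)) \<partial>lborel)
     = sqrt (2*pi) *\<^sub>R (\<integral>x. std_normal_density x *\<^sub>R iexp (\<sigma> * \<zeta> * x) \<partial>lborel)"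
    by (rule integral_scaleR_right)
  ultimately show ?thesis by (simp add: scaleR_conv_of_real mult_ac)
qed


lemma lborel_prod_integral:
  fixes f :: "'a::euclidean_space \<Rightarrow> real \<Rightarrow> complex"
  assumes int: "\<And>b. b \<in> Basis \<Longrightarrow> integrable lborel (f b)"
  shows "integrable (lborel::'a measure) (\<lambda>x. \<Prod>b\<in>Basis. f b (x \<bullet> b))"
    and "(\<integral>x. (\<Prod>b\<in>Basis. f b (x \<bullet> b)) \<partial>(lborel::'a measure)) = (\<Prod>b\<in>Basis. (\<integral>y. f b y \<partial>lborel))"
proof -
  interpret P: finite_product_sigma_finite "\<lambda>_. lborel" "Basis::'a set"
    by standard simp
  have meas[measurable]: "\<And>b. b \<in> Basis \<Longrightarrow> f b \<in> borel_measurable borel"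
    using int borel_measurable_integrable by (metis measurable_lborel1 measurable_lborel2)
  have mp: "(\<lambda>g. \<Sum>b\<in>Basis. g b *\<^sub>R b) \<in> measurable (\<Pi>\<^sub>M b\<in>(Basis::'a set). lborel) borel"
    by measurable
  have eq: "\<And>g. g \<in> space (\<Pi>\<^sub>M b\<in>(Basis::'a set). lborel) \<Longrightarrow>
      (\<Prod>b\<in>Basis. f b ((\<Sum>b\<in>Basis. g b *\<^sub>R b) \<bullet> b)) = (\<Prod>b\<in>Basis. f b (g b))"
    by (intro prod.cong refl) (simp add: inner_sum_left inner_Basis if_distrib sum.delta cong: if_cong)
  have mf: "(\<lambda>x::'a. \<Prod>b\<in>Basis. f b (x \<bullet> b)) \<in> borel_measurable borel"
    by measurable
  have I: "integrable (\<Pi>\<^sub>M b\<in>(Basis::'a set). lborel) (\<lambda>g. \<Prod>b\<in>Basis. f b (g b))"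
    by (rule P.product_integrable_prod) (auto intro: int)
  have I2: "integrable (\<Pi>\<^sub>M b\<in>(Basis::'a set). lborel) (\<lambda>g. \<Prod>b\<in>Basis. f b ((\<Sum>b\<in>Basis. g b *\<^sub>R b) \<bullet> b))"
    using Bochner_Integration.integrable_cong[OF refl eq] I by simp
  show "integrable (lborel::'a measure) (\<lambda>x. \<Prod>b\<in>Basis. f b (x \<bullet> b))"
    by (subst lborel_eq) (simp add: integrable_distr_eq[OF mp] mf I2 I)
  have "(\<integral>x. (\<Prod>b\<in>Basis. f b (x \<bullet> b)) \<partial>(lborel::'a measure)) =
     (\<integral>g. (\<Prod>b\<in>Basis. f b ((\<Sum>b\<in>Basis. g b *\<^sub>R b) \<bullet> b)) \<partial>(\<Pi>\<^sub>M b\<in>(Basis::'a set). lborel))"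
    by (subst lborel_eq) (simp add: integral_distr[OF mp] mf)
  also have "\<dots> = (\<integral>g. (\<Prod>b\<in>Basis. f b (g b)) \<partial>(\<Pi>\<^sub>M b\<in>(Basis::'a set). lborel))"
    by (rule Bochner_Integration.integral_cong[OF refl eq])
  also have "\<dots> = (\<Prod>b\<in>Basis. (\<integral>y. f b y \<partial>lborel))"
    by (rule P.product_integral_prod) (auto intro: int)
  finally show "(\<integral>x. (\<Prod>b\<in>Basis. f b (x \<bullet> b)) \<partial>(lborel::'a measure)) = (\<Prod>b\<in>Basis. (\<integral>y. f b y \<partial>lborel))" .
qed


definition W :: "real \<Rightarrow> 'a::euclidean_space \<Rightarrow> real" where
  "W \<sigma> x = exp (- (norm x)\<^sup>2 / (2 * \<sigma>\<^sup>2))"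

definition V :: "real \<Rightarrow> 'a::euclidean_space \<Rightarrow> real" where
  "V \<sigma> z = (\<sigma> * sqrt (2 * pi)) ^ DIM('a) * exp (- (\<sigma> * norm z)\<^sup>2 / 2)"

lemma W_measurable[measurable]: "W \<sigma> \<in> borel_measurable borel"
  unfolding W_def by measurable

lemma V_measurable[measurable]: "V \<sigma> \<in> borel_measurable borel"
  unfolding V_def by measurable

lemma W_nonneg: "0 \<le> W \<sigma> x" by (simp add: W_def)
lemma W_le1: "W \<sigma> x \<le> 1" by (simp add: W_def)
lemma V_nonneg: "\<sigma> > 0 \<Longrightarrow> 0 \<le> V \<sigma> x" by (simp add: V_def)
lemma V_minus: "V \<sigma> (- x) = V \<sigma> x" by (simp add: V_def)

lemma norm_sq_basis: "(norm (x::'a::euclidean_space))\<^sup>2 = (\<Sum>b\<in>Basis. (x \<bullet> b)\<^sup>2)"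
  unfolding power2_norm_eq_inner euclidean_inner[of x x] by (simp add: power2_eq_square)

lemma W_prod: "W \<sigma> (x::'a::euclidean_space) = (\<Prod>b\<in>Basis. gam \<sigma> (x \<bullet> b))"
proof -
  have "- (\<Sum>b\<in>Basis. (x \<bullet> b)\<^sup>2) / (2 * \<sigma>\<^sup>2) = (\<Sum>b\<in>(Basis::'a set). - (x \<bullet> b)\<^sup>2 / (2 * \<sigma>\<^sup>2))"
    by (simp add: sum_negf sum_divide_distrib)
  then show ?thesis unfolding W_def gam_def norm_sq_basis by (simp add: exp_sum)
qed

lemma iexp_prod: "exp (\<i> * complex_of_real ((\<zeta>::'a::euclidean_space) \<bullet> x)) = (\<Prod>b\<in>Basis. iexp ((\<zeta> \<bullet> b) * (x \<bullet> b)))"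
proof -
  have "\<i> * complex_of_real (\<zeta> \<bullet> x) = (\<Sum>b\<in>(Basis::'a set). \<i> * complex_of_real ((\<zeta> \<bullet> b) * (x \<bullet> b)))"
    unfolding euclidean_inner[of \<zeta> x] by (simp add: sum_distrib_left)
  then show ?thesis by (simp add: exp_sum)
qed

lemma W_FT:
  assumes s: "\<sigma> > 0"
  shows "integrable lborel (\<lambda>x::'a::euclidean_space. W \<sigma> x *\<^sub>R exp (\<i> * complex_of_real (\<zeta> \<bullet> x)))"
    and "(\<integral>x. W \<sigma> x *\<^sub>R exp (\<i> * complex_of_real (\<zeta> \<bullet> x)) \<partial>(lborel::'a measure)) = complex_of_real (V \<sigma> \<zeta>)"
proof -
  have eq: "(\<lambda>x::'a. W \<sigma> x *\<^sub>R exp (\<i> * complex_of_real (\<zeta> \<bullet> x))) =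
     (\<lambda>x. \<Prod>b\<in>Basis. (\<lambda>y. gam \<sigma> y *\<^sub>R iexp ((\<zeta> \<bullet> b) * y)) (x \<bullet> b))"
    by (auto simp: fun_eq_iff W_prod iexp_prod scaleR_conv_of_real prod.distrib)
  show "integrable lborel (\<lambda>x::'a::euclidean_space. W \<sigma> x *\<^sub>R exp (\<i> * complex_of_real (\<zeta> \<bullet> x)))"
    unfolding eq by (rule lborel_prod_integral(1)) (rule integrable_gam_iexp[OF s])
  have "(\<integral>x. W \<sigma> x *\<^sub>R exp (\<i> * complex_of_real (\<zeta> \<bullet> x)) \<partial>(lborel::'a measure))
     = (\<Prod>b\<in>Basis. complex_of_real (\<sigma> * sqrt (2 * pi) * exp (- (\<sigma> * (\<zeta> \<bullet> b))\<^sup>2 / 2)))"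
    unfolding eq by (rule trans[OF lborel_prod_integral(2)], rule integrable_gam_iexp[OF s], rule prod.cong[OF refl], rule gam_char[OF s])
  also have "\<dots> = complex_of_real (V \<sigma> \<zeta>)"
    unfolding V_def of_real_prod[symmetric] prod.distrib
    by (simp add: power_mult_distrib norm_sq_basis[of \<zeta>] sum_distrib_left sum_divide_distrib exp_sum[symmetric] sum_negf)
  finally show "(\<integral>x. W \<sigma> x *\<^sub>R exp (\<i> * complex_of_real (\<zeta> \<bullet> x)) \<partial>(lborel::'a measure)) = complex_of_real (V \<sigma> \<zeta>)" .
qed

lemma nn_integral_V:
  assumes s: "\<sigma> > 0"
  shows "(\<integral>\<^sup>+ z. ennreal (V \<sigma> (z::'a::euclidean_space)) \<partial>lborel) = ennreal ((2 * pi) ^ DIM('a))"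
proof -
  have eq: "\<And>z::'a. V \<sigma> z = (\<sigma> * sqrt (2 * pi)) ^ DIM('a) * (\<Prod>b\<in>Basis. gam (1/\<sigma>) (z \<bullet> b))"
  proof -
    fix z :: 'a
    have "(\<Prod>b\<in>Basis. gam (1/\<sigma>) (z \<bullet> b)) = W (1/\<sigma>) z" by (simp add: W_prod)
    also have "\<dots> = exp (- (\<sigma> * norm z)\<^sup>2 / 2)"
      unfolding W_def using s by (simp add: power_mult_distrib power_divide)
    finally show "V \<sigma> z = (\<sigma> * sqrt (2 * pi)) ^ DIM('a) * (\<Prod>b\<in>Basis. gam (1/\<sigma>) (z \<bullet> b))"
      by (simp add: V_def)
  qed
  have g1: "(\<integral>\<^sup>+ y. ennreal (gam (1/\<sigma>) y) \<partial>lborel) = ennreal (1/\<sigma> * sqrt (2 * pi))"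
    using s by (subst nn_integral_eq_integral) (auto simp: integrable_gam integral_gam gam_nonneg)
  have P: "(\<integral>\<^sup>+ z. (\<Prod>b\<in>(Basis::'a set). ennreal (gam (1/\<sigma>) (z \<bullet> b))) \<partial>lborel) = ennreal ((1/\<sigma> * sqrt (2 * pi)) ^ DIM('a))"
    using s by (subst nn_integral_lborel_prod) (auto simp: g1 ennreal_power)
  have R: "(\<sigma> * sqrt (2 * pi)) ^ DIM('a) * (1/\<sigma> * sqrt (2 * pi)) ^ DIM('a) = (2 * pi) ^ DIM('a)"
  proof -
    have "\<sigma> * sqrt (2 * pi) * (1/\<sigma> * sqrt (2 * pi)) = 2 * pi" using s by simp
    then show ?thesis by (simp only: power_mult_distrib[symmetric])
  qed
  have "(\<integral>\<^sup>+ z. ennreal (V \<sigma> (z::'a::euclidean_space)) \<partial>lborel)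
      = ennreal ((\<sigma> * sqrt (2 * pi)) ^ DIM('a)) * (\<integral>\<^sup>+ z. (\<Prod>b\<in>(Basis::'a set). ennreal (gam (1/\<sigma>) (z \<bullet> b))) \<partial>lborel)"
    using s by (simp add: eq ennreal_mult' prod_ennreal gam_nonneg prod_nonneg nn_integral_cmult)
  also have "\<dots> = ennreal ((\<sigma> * sqrt (2 * pi)) ^ DIM('a) * (1/\<sigma> * sqrt (2 * pi)) ^ DIM('a))"
    unfolding P using s by (simp add: ennreal_mult'')
  also have "\<dots> = ennreal ((2 * pi) ^ DIM('a))" unfolding R ..
  finally show ?thesis .
qed


lemma iexp_diff: "iexp (a - b) = iexp a * iexp (- b)"
proof -
  have "iexp (a - b) = exp (\<i> * complex_of_real a + (- (\<i> * complex_of_real b)))"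
    by (simp add: right_diff_distrib)
  then show ?thesis by (simp only: exp_add) simp
qed

lemma integrable_pair_mult:
  fixes g :: "'a::euclidean_space \<Rightarrow> real" and h :: "'b::euclidean_space \<Rightarrow> real"
  assumes g: "integrable lborel g" and h: "integrable lborel h"
  shows "integrable (lborel \<Otimes>\<^sub>M lborel) (\<lambda>p. g (fst p) * h (snd p))"
proof (rule lborel_pair.Fubini_integrable)
  have [measurable]: "g \<in> borel_measurable borel" "h \<in> borel_measurable borel"
    using g h by (auto dest: borel_measurable_integrable)
  show "(\<lambda>p. g (fst p) * h (snd p)) \<in> borel_measurable (lborel \<Otimes>\<^sub>M lborel)"
    by measurable
  have "(\<lambda>x. \<integral>y. norm (g (fst (x, y)) * h (snd (x, y))) \<partial>lborel) = (\<lambda>x. \<bar>g x\<bar> * (\<integral>y. \<bar>h y\<bar> \<partial>lborel))"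
    by (simp add: abs_mult)
  then show "integrable lborel (\<lambda>x. \<integral>y. norm (g (fst (x, y)) * h (snd (x, y))) \<partial>lborel)"
    using g by simp
  show "AE x in lborel. integrable lborel (\<lambda>y. g (fst (x, y)) * h (snd (x, y)))"
    using h by simp
qed

definition FT :: "('a::euclidean_space \<Rightarrow> complex) \<Rightarrow> 'a \<Rightarrow> complex" where
  "FT f x = (\<integral>\<xi>. f \<xi> * iexp (\<xi> \<bullet> x) \<partial>lborel)"

lemma FT_measurable:
  assumes [measurable]: "f \<in> borel_measurable borel"
  shows "FT f \<in> borel_measurable borel"
proof -
  have "(\<lambda>(x::'a, \<xi>::'a). f \<xi> * iexp (\<xi> \<bullet> x)) \<in> borel_measurable (borel \<Otimes>\<^sub>M lborel)"
    by measurable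
  then have "(\<lambda>x. \<integral>\<xi>. f \<xi> * iexp (\<xi> \<bullet> x) \<partial>lborel) \<in> borel_measurable borel"
    by (rule lborel.borel_measurable_lebesgue_integral)
  then show ?thesis unfolding FT_def[abs_def] .
qed

lemma FT_bound:
  assumes "integrable lborel f"
  shows "cmod (FT f x) \<le> (\<integral>\<xi>. cmod (f \<xi>) \<partial>lborel)"
proof -
  have "cmod (FT f x) \<le> (\<integral>\<xi>. cmod (f \<xi> * iexp (\<xi> \<bullet> x)) \<partial>lborel)"
    unfolding FT_def by (rule integral_norm_bound)
  also have "\<dots> = (\<integral>\<xi>. cmod (f \<xi>) \<partial>lborel)"
    by (simp add: norm_mult)
  finally show ?thesis .
qed

lemma integrable_iexp_mult:
  fixes f :: "'a::euclidean_space \<Rightarrow> complex"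
  assumes "integrable lborel f"
  shows "integrable lborel (\<lambda>\<xi>. f \<xi> * iexp (\<xi> \<bullet> x))"
proof (rule Bochner_Integration.integrable_bound[OF integrable_norm[OF assms]])
  have [measurable]: "f \<in> borel_measurable borel" using assms by (auto dest: borel_measurable_integrable)
  show "(\<lambda>\<xi>. f \<xi> * iexp (\<xi> \<bullet> x)) \<in> borel_measurable lborel" by measurable
  show "AE \<xi> in lborel. norm (f \<xi> * iexp (\<xi> \<bullet> x)) \<le> norm (norm (f \<xi>))"
    by (simp add: norm_mult)
qed


lemma integrable_W: "\<sigma> > 0 \<Longrightarrow> integrable lborel (W \<sigma> :: 'a::euclidean_space \<Rightarrow> real)"
  using W_FT(1)[of \<sigma> "0::'a"] by (simp add: scaleR_conv_of_real complex_of_real_integrable_eq)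

lemma V_le: "\<sigma> > 0 \<Longrightarrow> V \<sigma> x \<le> (\<sigma> * sqrt (2 * pi)) ^ DIM('a::euclidean_space)"
  for x :: "'a::euclidean_space"
  by (simp add: V_def)

lemma plancherel_eq:
  fixes f :: "'a::euclidean_space \<Rightarrow> complex"
  assumes f: "integrable lborel f" and s: "\<sigma> > 0"
  shows "integrable lborel (\<lambda>\<xi>. f \<xi> * (\<integral>\<eta>. cnj (f \<eta>) * complex_of_real (V \<sigma> (\<xi> - \<eta>)) \<partial>lborel))"
    and "complex_of_real (\<integral>x. W \<sigma> x * (cmod (FT f x))\<^sup>2 \<partial>lborel)
       = (\<integral>\<xi>. f \<xi> * (\<integral>\<eta>. cnj (f \<eta>) * complex_of_real (V \<sigma> (\<xi> - \<eta>)) \<partial>lborel) \<partial>lborel)"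
proof -
  have fm[measurable]: "f \<in> borel_measurable borel" using f by (auto dest: borel_measurable_integrable)
  have Fm[measurable]: "FT f \<in> borel_measurable borel" by (rule FT_measurable) simp
  have cFm[measurable]: "(\<lambda>x. cnj (FT f x)) \<in> borel_measurable borel"
    by (rule borel_measurable_continuous_on[OF continuous_on_cnj[OF continuous_on_id] Fm])
  have cfm[measurable]: "(\<lambda>x. cnj (f x)) \<in> borel_measurable borel"
    by (rule borel_measurable_continuous_on[OF continuous_on_cnj[OF continuous_on_id] fm])
  define N where "N = (\<integral>\<xi>. cmod (f \<xi>) \<partial>lborel)"
  have bndF: "\<And>x. cmod (FT f x) \<le> N" unfolding N_def by (rule FT_bound[OF f])
  have N0: "0 \<le> N" unfolding N_def by simp
  have intW: "integrable lborel (W \<sigma> :: 'a \<Rightarrow> real)" by (rule integrable_W[OF s])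
  have intf: "integrable lborel (\<lambda>\<xi>. cmod (f \<xi>))" using f by simp
  define G where "G = (\<lambda>x \<xi>. W \<sigma> x *\<^sub>R (f \<xi> * iexp (\<xi> \<bullet> x) * cnj (FT f x)))"
  have G_int: "integrable (lborel \<Otimes>\<^sub>M lborel) (case_prod G)"
  proof -
    have "integrable (lborel \<Otimes>\<^sub>M lborel) (\<lambda>p::'a\<times>'a. (\<lambda>x. N * W \<sigma> x) (fst p) * cmod (f (snd p)))"
      by (rule integrable_pair_mult[OF _ intf]) (simp add: intW)
    then have I0: "integrable (lborel \<Otimes>\<^sub>M lborel) (\<lambda>p::'a\<times>'a. N * W \<sigma> (fst p) * cmod (f (snd p)))" by simp
    show ?thesis
  proof (rule Bochner_Integration.integrable_bound[OF I0])
    show "case_prod G \<in> borel_measurable (lborel \<Otimes>\<^sub>M lborel)" unfolding G_def by measurable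
    show "AE p in lborel \<Otimes>\<^sub>M lborel. norm (case_prod G p) \<le> norm (N * W \<sigma> (fst p) * cmod (f (snd p)))"
    proof (rule AE_I2)
      fix p :: "'a \<times> 'a"
      obtain x \<xi> where p: "p = (x, \<xi>)" by (cases p)
      have "norm (G x \<xi>) = W \<sigma> x * cmod (f \<xi>) * cmod (FT f x)"
        by (simp add: G_def norm_mult W_nonneg)
      also have "\<dots> \<le> W \<sigma> x * cmod (f \<xi>) * N"
        by (intro mult_left_mono bndF) (simp add: W_nonneg)
      finally show "norm (case_prod G p) \<le> norm (N * W \<sigma> (fst p) * cmod (f (snd p)))"
        using N0 unfolding p by (simp add: W_nonneg mult_ac abs_mult)
    qed
  qed
  qed
  have step1: "complex_of_real (\<integral>x. W \<sigma> x * (cmod (FT f x))\<^sup>2 \<partial>lborel) = (\<integral>x. (\<integral>\<xi>. G x \<xi> \<partial>lborel) \<partial>lborel)"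
  proof -
    have "complex_of_real (\<integral>x. W \<sigma> x * (cmod (FT f x))\<^sup>2 \<partial>lborel) = (\<integral>x. complex_of_real (W \<sigma> x * (cmod (FT f x))\<^sup>2) \<partial>lborel)"
      by (rule integral_complex_of_real[symmetric])
    also have "\<dots> = (\<integral>x. (\<integral>\<xi>. G x \<xi> \<partial>lborel) \<partial>lborel)"
    proof (rule Bochner_Integration.integral_cong[OF refl])
      fix x :: 'a
      have "(\<integral>\<xi>. G x \<xi> \<partial>lborel) = W \<sigma> x *\<^sub>R ((\<integral>\<xi>. f \<xi> * iexp (\<xi> \<bullet> x) \<partial>lborel) * cnj (FT f x))"
        unfolding G_def by (simp add: integral_mult_left_zero)
      also have "\<dots> = complex_of_real (W \<sigma> x * (cmod (FT f x))\<^sup>2)"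
        by (simp add: FT_def[symmetric] complex_norm_square[symmetric] scaleR_conv_of_real)
      finally show "complex_of_real (W \<sigma> x * (cmod (FT f x))\<^sup>2) = (\<integral>\<xi>. G x \<xi> \<partial>lborel)" by simp
    qed
    finally show ?thesis .
  qed
  have step2: "(\<integral>x. (\<integral>\<xi>. G x \<xi> \<partial>lborel) \<partial>lborel) = (\<integral>\<xi>. (\<integral>x. G x \<xi> \<partial>lborel) \<partial>lborel)"
    using lborel_pair.Fubini_integral[OF G_int] by simp
  have int2: "integrable lborel (\<lambda>\<xi>. (\<integral>x. G x \<xi> \<partial>lborel))"
    using lborel_pair.integrable_snd[OF G_int] .
  have inner: "(\<integral>x. G x \<xi> \<partial>lborel) = f \<xi> * (\<integral>\<eta>. cnj (f \<eta>) * complex_of_real (V \<sigma> (\<xi> - \<eta>)) \<partial>lborel)" for \<xi>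
  proof -
    define H where "H = (\<lambda>x \<eta>. W \<sigma> x *\<^sub>R (cnj (f \<eta>) * iexp (\<xi> \<bullet> x - \<eta> \<bullet> x)))"
    have H_int: "integrable (lborel \<Otimes>\<^sub>M lborel) (case_prod H)"
    proof (rule Bochner_Integration.integrable_bound[OF integrable_pair_mult[OF intW intf]])
      show "case_prod H \<in> borel_measurable (lborel \<Otimes>\<^sub>M lborel)" unfolding H_def by measurable
      show "AE p in lborel \<Otimes>\<^sub>M lborel. norm (case_prod H p) \<le> norm (W \<sigma> (fst p) * cmod (f (snd p)))"
        by (rule AE_I2) (auto simp: H_def norm_mult W_nonneg)
    qed
    have cF: "cnj (FT f x) = (\<integral>\<eta>. cnj (f \<eta>) * iexp (- (\<eta> \<bullet> x)) \<partial>lborel)" for x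
    proof -
      have "cnj (FT f x) = (\<integral>\<eta>. cnj (f \<eta> * iexp (\<eta> \<bullet> x)) \<partial>lborel)" unfolding FT_def by (rule Bochner_Integration.integral_cnj[symmetric])
      also have "\<dots> = (\<integral>\<eta>. cnj (f \<eta>) * iexp (- (\<eta> \<bullet> x)) \<partial>lborel)"
        by (rule Bochner_Integration.integral_cong[OF refl]) (simp add: exp_cnj)
      finally show ?thesis .
    qed
    have "(\<integral>x. G x \<xi> \<partial>lborel) = (\<integral>x. f \<xi> * (\<integral>\<eta>. H x \<eta> \<partial>lborel) \<partial>lborel)"
    proof (rule Bochner_Integration.integral_cong[OF refl])
      fix x :: 'a
      have "(\<integral>\<eta>. H x \<eta> \<partial>lborel) = W \<sigma> x *\<^sub>R (iexp (\<xi> \<bullet> x) * (\<integral>\<eta>. cnj (f \<eta>) * iexp (- (\<eta> \<bullet> x)) \<partial>lborel))"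
      proof -
        have "\<And>\<eta>. H x \<eta> = W \<sigma> x *\<^sub>R (iexp (\<xi> \<bullet> x) * (cnj (f \<eta>) * iexp (- (\<eta> \<bullet> x))))"
          unfolding H_def iexp_diff by (simp add: mult_ac)
        then show ?thesis by simp
      qed
      then show "G x \<xi> = f \<xi> * (\<integral>\<eta>. H x \<eta> \<partial>lborel)"
        by (simp add: G_def cF mult_ac)
    qed
    also have "\<dots> = f \<xi> * (\<integral>x. (\<integral>\<eta>. H x \<eta> \<partial>lborel) \<partial>lborel)" by simp
    also have "(\<integral>x. (\<integral>\<eta>. H x \<eta> \<partial>lborel) \<partial>lborel) = (\<integral>\<eta>. (\<integral>x. H x \<eta> \<partial>lborel) \<partial>lborel)"
      using lborel_pair.Fubini_integral[OF H_int] by simp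
    also have "\<dots> = (\<integral>\<eta>. cnj (f \<eta>) * complex_of_real (V \<sigma> (\<xi> - \<eta>)) \<partial>lborel)"
    proof (rule Bochner_Integration.integral_cong[OF refl])
      fix \<eta> :: 'a
      have "(\<integral>x. H x \<eta> \<partial>lborel) = cnj (f \<eta>) * (\<integral>x. W \<sigma> x *\<^sub>R iexp ((\<xi> - \<eta>) \<bullet> x) \<partial>lborel)"
        unfolding H_def by (simp add: scaleR_conv_of_real mult_ac inner_diff_left)
      also have "\<dots> = cnj (f \<eta>) * complex_of_real (V \<sigma> (\<xi> - \<eta>))"
        by (simp add: W_FT(2)[OF s])
      finally show "(\<integral>x. H x \<eta> \<partial>lborel) = cnj (f \<eta>) * complex_of_real (V \<sigma> (\<xi> - \<eta>))" .
    qed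
    finally show ?thesis .
  qed
  show "integrable lborel (\<lambda>\<xi>. f \<xi> * (\<integral>\<eta>. cnj (f \<eta>) * complex_of_real (V \<sigma> (\<xi> - \<eta>)) \<partial>lborel))"
    using int2 by (simp add: inner)
  show "complex_of_real (\<integral>x. W \<sigma> x * (cmod (FT f x))\<^sup>2 \<partial>lborel)
       = (\<integral>\<xi>. f \<xi> * (\<integral>\<eta>. cnj (f \<eta>) * complex_of_real (V \<sigma> (\<xi> - \<eta>)) \<partial>lborel) \<partial>lborel)"
    using step1 step2 by (simp add: inner)
qed


lemma nn_integral_translate:
  fixes g :: "'a::euclidean_space \<Rightarrow> ennreal"
  assumes [measurable]: "g \<in> borel_measurable borel"
  shows "(\<integral>\<^sup>+ x. g (c + x) \<partial>lborel) = (\<integral>\<^sup>+ x. g x \<partial>lborel)"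
proof -
  have "(\<integral>\<^sup>+ x. g x \<partial>lborel) = (\<integral>\<^sup>+ x. g x \<partial>(distr lborel borel ((+) c)))"
    by (simp add: lborel_distr_plus)
  also have "\<dots> = (\<integral>\<^sup>+ x. g (c + x) \<partial>lborel)"
    by (subst nn_integral_distr) auto
  finally show ?thesis ..
qed

lemma nn_integral_V_shift:
  fixes \<xi> :: "'a::euclidean_space"
  assumes s: "\<sigma> > 0"
  shows "(\<integral>\<^sup>+ \<eta>. ennreal (V \<sigma> (\<xi> - \<eta>)) \<partial>lborel) = ennreal ((2 * pi) ^ DIM('a))"
    and "(\<integral>\<^sup>+ \<eta>. ennreal (V \<sigma> (\<eta> - \<xi>)) \<partial>lborel) = ennreal ((2 * pi) ^ DIM('a))"
proof -
  have m: "(\<lambda>x. ennreal (V \<sigma> (x::'a))) \<in> borel_measurable borel" by measurable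
  have "(\<integral>\<^sup>+ \<eta>. ennreal (V \<sigma> (\<eta> - \<xi>)) \<partial>lborel) = (\<integral>\<^sup>+ \<eta>. ennreal (V \<sigma> ((- \<xi>) + \<eta>)) \<partial>lborel)"
    by (simp add: algebra_simps)
  also have "\<dots> = ennreal ((2 * pi) ^ DIM('a))"
    using nn_integral_translate[OF m, of "- \<xi>"] nn_integral_V[OF s] by simp
  finally show "(\<integral>\<^sup>+ \<eta>. ennreal (V \<sigma> (\<eta> - \<xi>)) \<partial>lborel) = ennreal ((2 * pi) ^ DIM('a))" .
  moreover have "\<And>\<eta>. V \<sigma> (\<xi> - \<eta>) = V \<sigma> (\<eta> - \<xi>)"
    by (metis V_minus minus_diff_eq)
  ultimately show "(\<integral>\<^sup>+ \<eta>. ennreal (V \<sigma> (\<xi> - \<eta>)) \<partial>lborel) = ennreal ((2 * pi) ^ DIM('a))" by simp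
qed

lemma plancherel_W:
  fixes f :: "'a::euclidean_space \<Rightarrow> complex"
  assumes f: "integrable lborel f" and s: "\<sigma> > 0"
  shows "(\<integral>\<^sup>+x. ennreal (W \<sigma> x * (cmod (FT f x))\<^sup>2) \<partial>lborel)
     \<le> ennreal ((2 * pi) ^ DIM('a)) * (\<integral>\<^sup>+\<xi>. ennreal ((cmod (f \<xi>))\<^sup>2) \<partial>lborel)"
proof -
  have fm[measurable]: "f \<in> borel_measurable borel" using f by (auto dest: borel_measurable_integrable)
  have Fm[measurable]: "FT f \<in> borel_measurable borel" by (rule FT_measurable) simp
  have cfm[measurable]: "(\<lambda>x. cnj (f x)) \<in> borel_measurable borel"
    by (rule borel_measurable_continuous_on[OF continuous_on_cnj[OF continuous_on_id] fm])
  define N where "N = (\<integral>\<xi>. cmod (f \<xi>) \<partial>lborel)"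
  have bndF: "\<And>x. cmod (FT f x) \<le> N" unfolding N_def by (rule FT_bound[OF f])
  have N0: "0 \<le> N" unfolding N_def by simp
  define D where "D = ennreal ((2 * pi) ^ DIM('a))"
  define Z where "Z = (\<integral>\<xi>. f \<xi> * (\<integral>\<eta>. cnj (f \<eta>) * complex_of_real (V \<sigma> (\<xi> - \<eta>)) \<partial>lborel) \<partial>lborel)"
  define I where "I = (\<integral>x. W \<sigma> x * (cmod (FT f x))\<^sup>2 \<partial>lborel)"
  have intI: "integrable lborel (\<lambda>x. W \<sigma> x * (cmod (FT f x))\<^sup>2)"
  proof (rule Bochner_Integration.integrable_bound[OF integrable_mult_left[OF integrable_W[OF s], of "N\<^sup>2"]])
    show "(\<lambda>x. W \<sigma> x * (cmod (FT f x))\<^sup>2) \<in> borel_measurable lborel" by measurable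
    show "AE x in lborel. norm (W \<sigma> x * (cmod (FT f x))\<^sup>2) \<le> norm (W \<sigma> x * N\<^sup>2)"
      by (rule AE_I2) (auto simp: W_nonneg intro!: mult_left_mono power_mono bndF)
  qed
  have "(\<integral>\<^sup>+x. ennreal (W \<sigma> x * (cmod (FT f x))\<^sup>2) \<partial>lborel) = ennreal I"
    unfolding I_def by (rule nn_integral_eq_integral[OF intI]) (simp add: W_nonneg)
  also have "I = Re Z"
    using plancherel_eq(2)[OF f s] unfolding I_def Z_def by (metis Re_complex_of_real)
  also have "ennreal (Re Z) \<le> ennreal (cmod Z)"
    by (intro ennreal_leI complex_Re_le_cmod)
  also have "ennreal (cmod Z) \<le> (\<integral>\<^sup>+\<xi>. ennreal (cmod (f \<xi> * (\<integral>\<eta>. cnj (f \<eta>) * complex_of_real (V \<sigma> (\<xi> - \<eta>)) \<partial>lborel))) \<partial>lborel)"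
    unfolding Z_def by (rule integral_norm_bound_ennreal[OF plancherel_eq(1)[OF f s]])
  also have "\<dots> \<le> (\<integral>\<^sup>+\<xi>. (\<integral>\<^sup>+\<eta>. ennreal (cmod (f \<xi>) * cmod (f \<eta>) * V \<sigma> (\<xi> - \<eta>)) \<partial>lborel) \<partial>lborel)"
  proof (rule nn_integral_mono)
    fix \<xi> :: 'a
    have intg: "integrable lborel (\<lambda>\<eta>. cnj (f \<eta>) * complex_of_real (V \<sigma> (\<xi> - \<eta>)))"
    proof (rule Bochner_Integration.integrable_bound[OF integrable_mult_left[OF integrable_norm[OF f], of "(\<sigma> * sqrt (2 * pi)) ^ DIM('a)"]])
      show "(\<lambda>\<eta>. cnj (f \<eta>) * complex_of_real (V \<sigma> (\<xi> - \<eta>))) \<in> borel_measurable lborel" by measurable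
      show "AE \<eta> in lborel. norm (cnj (f \<eta>) * complex_of_real (V \<sigma> (\<xi> - \<eta>))) \<le> norm (norm (f \<eta>) * (\<sigma> * sqrt (2 * pi)) ^ DIM('a))"
        using s by (intro AE_I2) (auto simp: norm_mult V_nonneg[OF s] abs_mult power_abs intro!: mult_left_mono V_le[OF s])
    qed
    have "ennreal (cmod (f \<xi> * (\<integral>\<eta>. cnj (f \<eta>) * complex_of_real (V \<sigma> (\<xi> - \<eta>)) \<partial>lborel)))
        = ennreal (cmod (f \<xi>)) * ennreal (cmod (\<integral>\<eta>. cnj (f \<eta>) * complex_of_real (V \<sigma> (\<xi> - \<eta>)) \<partial>lborel))"
      by (simp add: norm_mult ennreal_mult)
    also have "\<dots> \<le> ennreal (cmod (f \<xi>)) * (\<integral>\<^sup>+\<eta>. ennreal (norm (cnj (f \<eta>) * complex_of_real (V \<sigma> (\<xi> - \<eta>)))) \<partial>lborel)"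
      by (intro mult_left_mono integral_norm_bound_ennreal[OF intg]) simp
    also have "\<dots> = (\<integral>\<^sup>+\<eta>. ennreal (cmod (f \<xi>) * cmod (f \<eta>) * V \<sigma> (\<xi> - \<eta>)) \<partial>lborel)"
      by (subst nn_integral_cmult[symmetric]) (auto intro!: nn_integral_cong simp: norm_mult V_nonneg[OF s] ennreal_mult mult_ac)
    finally show "ennreal (cmod (f \<xi> * (\<integral>\<eta>. cnj (f \<eta>) * complex_of_real (V \<sigma> (\<xi> - \<eta>)) \<partial>lborel)))
        \<le> (\<integral>\<^sup>+\<eta>. ennreal (cmod (f \<xi>) * cmod (f \<eta>) * V \<sigma> (\<xi> - \<eta>)) \<partial>lborel)" .
  qed
  also have "\<dots> \<le> (\<integral>\<^sup>+\<xi>. (\<integral>\<^sup>+\<eta>. ennreal (1/2) * ennreal ((cmod (f \<xi>))\<^sup>2 * V \<sigma> (\<xi> - \<eta>))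
                                     + ennreal (1/2) * ennreal ((cmod (f \<eta>))\<^sup>2 * V \<sigma> (\<xi> - \<eta>)) \<partial>lborel) \<partial>lborel)"
  proof (intro nn_integral_mono)
    fix \<xi> \<eta> :: 'a
    have "cmod (f \<xi>) * cmod (f \<eta>) \<le> (cmod (f \<xi>))\<^sup>2 / 2 + (cmod (f \<eta>))\<^sup>2 / 2"
      using sum_squares_bound[of "cmod (f \<xi>)" "cmod (f \<eta>)"] by (simp add: power2_eq_square)
    then have "cmod (f \<xi>) * cmod (f \<eta>) * V \<sigma> (\<xi> - \<eta>) \<le> ((cmod (f \<xi>))\<^sup>2 / 2 + (cmod (f \<eta>))\<^sup>2 / 2) * V \<sigma> (\<xi> - \<eta>)"
      by (rule mult_right_mono) (rule V_nonneg[OF s])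
    also have "\<dots> = 1/2 * ((cmod (f \<xi>))\<^sup>2 * V \<sigma> (\<xi> - \<eta>)) + 1/2 * ((cmod (f \<eta>))\<^sup>2 * V \<sigma> (\<xi> - \<eta>))"
      by (simp add: algebra_simps)
    finally have h: "cmod (f \<xi>) * cmod (f \<eta>) * V \<sigma> (\<xi> - \<eta>) \<le> 1/2 * ((cmod (f \<xi>))\<^sup>2 * V \<sigma> (\<xi> - \<eta>)) + 1/2 * ((cmod (f \<eta>))\<^sup>2 * V \<sigma> (\<xi> - \<eta>))" .
    have p1: "0 \<le> (cmod (f \<xi>))\<^sup>2 * V \<sigma> (\<xi> - \<eta>)" "0 \<le> (cmod (f \<eta>))\<^sup>2 * V \<sigma> (\<xi> - \<eta>)"
      by (simp_all add: V_nonneg[OF s])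
    have "ennreal (cmod (f \<xi>) * cmod (f \<eta>) * V \<sigma> (\<xi> - \<eta>)) \<le> ennreal (1/2 * ((cmod (f \<xi>))\<^sup>2 * V \<sigma> (\<xi> - \<eta>)) + 1/2 * ((cmod (f \<eta>))\<^sup>2 * V \<sigma> (\<xi> - \<eta>)))"
      by (rule ennreal_leI[OF h])
    also have "\<dots> = ennreal (1/2 * ((cmod (f \<xi>))\<^sup>2 * V \<sigma> (\<xi> - \<eta>))) + ennreal (1/2 * ((cmod (f \<eta>))\<^sup>2 * V \<sigma> (\<xi> - \<eta>)))"
      using p1 by (intro ennreal_plus) auto
    also have "\<dots> = ennreal (1/2) * ennreal ((cmod (f \<xi>))\<^sup>2 * V \<sigma> (\<xi> - \<eta>)) + ennreal (1/2) * ennreal ((cmod (f \<eta>))\<^sup>2 * V \<sigma> (\<xi> - \<eta>))"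
      using p1 by (intro arg_cong2[where f="(+)"] ennreal_mult) auto
    finally show "ennreal (cmod (f \<xi>) * cmod (f \<eta>) * V \<sigma> (\<xi> - \<eta>)) \<le> ennreal (1/2) * ennreal ((cmod (f \<xi>))\<^sup>2 * V \<sigma> (\<xi> - \<eta>))
                                     + ennreal (1/2) * ennreal ((cmod (f \<eta>))\<^sup>2 * V \<sigma> (\<xi> - \<eta>))" .
  qed
  also have "\<dots> = ennreal (1/2) * (\<integral>\<^sup>+\<xi>. (\<integral>\<^sup>+\<eta>. ennreal ((cmod (f \<xi>))\<^sup>2 * V \<sigma> (\<xi> - \<eta>)) \<partial>lborel) \<partial>lborel)
                 + ennreal (1/2) * (\<integral>\<^sup>+\<xi>. (\<integral>\<^sup>+\<eta>. ennreal ((cmod (f \<eta>))\<^sup>2 * V \<sigma> (\<xi> - \<eta>)) \<partial>lborel) \<partial>lborel)"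
    by (simp add: nn_integral_add nn_integral_cmult)
  also have "(\<integral>\<^sup>+\<xi>. (\<integral>\<^sup>+\<eta>. ennreal ((cmod (f \<xi>))\<^sup>2 * V \<sigma> (\<xi> - \<eta>)) \<partial>lborel) \<partial>lborel)
       = D * (\<integral>\<^sup>+\<xi>. ennreal ((cmod (f \<xi>))\<^sup>2) \<partial>lborel)"
  proof -
    have "\<And>\<xi>. (\<integral>\<^sup>+\<eta>. ennreal ((cmod (f \<xi>))\<^sup>2 * V \<sigma> (\<xi> - \<eta>)) \<partial>lborel) = ennreal ((cmod (f \<xi>))\<^sup>2) * D"
    proof -
      fix \<xi>
      have "(\<integral>\<^sup>+\<eta>. ennreal ((cmod (f \<xi>))\<^sup>2 * V \<sigma> (\<xi> - \<eta>)) \<partial>lborel) = (\<integral>\<^sup>+\<eta>. ennreal ((cmod (f \<xi>))\<^sup>2) * ennreal (V \<sigma> (\<xi> - \<eta>)) \<partial>lborel)"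
        by (intro nn_integral_cong ennreal_mult) (simp_all add: V_nonneg[OF s])
      also have "\<dots> = ennreal ((cmod (f \<xi>))\<^sup>2) * (\<integral>\<^sup>+\<eta>. ennreal (V \<sigma> (\<xi> - \<eta>)) \<partial>lborel)"
        by (rule nn_integral_cmult) measurable
      also have "\<dots> = ennreal ((cmod (f \<xi>))\<^sup>2) * D"
        unfolding D_def nn_integral_V_shift(1)[OF s] ..
      finally show "(\<integral>\<^sup>+\<eta>. ennreal ((cmod (f \<xi>))\<^sup>2 * V \<sigma> (\<xi> - \<eta>)) \<partial>lborel) = ennreal ((cmod (f \<xi>))\<^sup>2) * D" .
    qed
    then have "(\<integral>\<^sup>+\<xi>. (\<integral>\<^sup>+\<eta>. ennreal ((cmod (f \<xi>))\<^sup>2 * V \<sigma> (\<xi> - \<eta>)) \<partial>lborel) \<partial>lborel) = (\<integral>\<^sup>+\<xi>. D * ennreal ((cmod (f \<xi>))\<^sup>2) \<partial>lborel)"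
      by (simp add: mult.commute)
    also have "\<dots> = D * (\<integral>\<^sup>+\<xi>. ennreal ((cmod (f \<xi>))\<^sup>2) \<partial>lborel)"
      by (rule nn_integral_cmult) measurable
    finally show ?thesis .
  qed
  also have "(\<integral>\<^sup>+\<xi>. (\<integral>\<^sup>+\<eta>. ennreal ((cmod (f \<eta>))\<^sup>2 * V \<sigma> (\<xi> - \<eta>)) \<partial>lborel) \<partial>lborel)
       = (\<integral>\<^sup>+\<eta>. (\<integral>\<^sup>+\<xi>. ennreal ((cmod (f \<eta>))\<^sup>2 * V \<sigma> (\<xi> - \<eta>)) \<partial>lborel) \<partial>lborel)"
    by (rule lborel_pair.Fubini'[symmetric]) measurable
  also have "\<dots> = D * (\<integral>\<^sup>+\<eta>. ennreal ((cmod (f \<eta>))\<^sup>2) \<partial>lborel)"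
  proof -
    have "\<And>\<eta>. (\<integral>\<^sup>+\<xi>. ennreal ((cmod (f \<eta>))\<^sup>2 * V \<sigma> (\<xi> - \<eta>)) \<partial>lborel) = ennreal ((cmod (f \<eta>))\<^sup>2) * D"
    proof -
      fix \<eta>
      have "(\<integral>\<^sup>+\<xi>. ennreal ((cmod (f \<eta>))\<^sup>2 * V \<sigma> (\<xi> - \<eta>)) \<partial>lborel) = (\<integral>\<^sup>+\<xi>. ennreal ((cmod (f \<eta>))\<^sup>2) * ennreal (V \<sigma> (\<xi> - \<eta>)) \<partial>lborel)"
        by (intro nn_integral_cong ennreal_mult) (simp_all add: V_nonneg[OF s])
      also have "\<dots> = ennreal ((cmod (f \<eta>))\<^sup>2) * (\<integral>\<^sup>+\<xi>. ennreal (V \<sigma> (\<xi> - \<eta>)) \<partial>lborel)"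
        by (rule nn_integral_cmult) measurable
      also have "\<dots> = ennreal ((cmod (f \<eta>))\<^sup>2) * D"
        unfolding D_def nn_integral_V_shift(2)[OF s] ..
      finally show "(\<integral>\<^sup>+\<xi>. ennreal ((cmod (f \<eta>))\<^sup>2 * V \<sigma> (\<xi> - \<eta>)) \<partial>lborel) = ennreal ((cmod (f \<eta>))\<^sup>2) * D" .
    qed
    then have "(\<integral>\<^sup>+\<eta>. (\<integral>\<^sup>+\<xi>. ennreal ((cmod (f \<eta>))\<^sup>2 * V \<sigma> (\<xi> - \<eta>)) \<partial>lborel) \<partial>lborel) = (\<integral>\<^sup>+\<eta>. D * ennreal ((cmod (f \<eta>))\<^sup>2) \<partial>lborel)"
      by (simp add: mult.commute)
    also have "\<dots> = D * (\<integral>\<^sup>+\<eta>. ennreal ((cmod (f \<eta>))\<^sup>2) \<partial>lborel)"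
      by (rule nn_integral_cmult) measurable
    finally show ?thesis .
  qed
  also have "ennreal (1/2) * (D * (\<integral>\<^sup>+\<xi>. ennreal ((cmod (f \<xi>))\<^sup>2) \<partial>lborel)) + ennreal (1/2) * (D * (\<integral>\<^sup>+\<eta>. ennreal ((cmod (f \<eta>))\<^sup>2) \<partial>lborel))
      = (ennreal (1/2) + ennreal (1/2)) * (D * (\<integral>\<^sup>+\<xi>. ennreal ((cmod (f \<xi>))\<^sup>2) \<partial>lborel))"
    by (simp add: distrib_right)
  also have "ennreal (1/2) + ennreal (1/2) = 1"
  proof -
    have "ennreal (1/2) + ennreal (1/2) = ennreal (1/2 + 1/2)" by (rule ennreal_plus[symmetric]) auto
    then show ?thesis by simp
  qed
  finally show ?thesis unfolding D_def by simp
qed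


lemma W_mono: "0 < \<sigma> \<Longrightarrow> \<sigma> \<le> \<tau> \<Longrightarrow> W \<sigma> x \<le> W \<tau> x"
  unfolding W_def
proof (subst exp_le_cancel_iff)
  assume s: "0 < \<sigma>" "\<sigma> \<le> \<tau>"
  have "2 * \<sigma>\<^sup>2 \<le> 2 * \<tau>\<^sup>2" using s by (simp add: power_mono)
  then have "(norm x)\<^sup>2 / (2 * \<tau>\<^sup>2) \<le> (norm x)\<^sup>2 / (2 * \<sigma>\<^sup>2)"
    using s by (intro divide_left_mono) auto
  then show "- (norm x)\<^sup>2 / (2 * \<sigma>\<^sup>2) \<le> - (norm x)\<^sup>2 / (2 * \<tau>\<^sup>2)" by simp
qed

lemma W_lim: "(\<lambda>n. W (real (Suc n)) x) \<longlonglongrightarrow> 1"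
proof -
  have "(\<lambda>n. exp (- ((norm x)\<^sup>2 / 2) * (inverse (real (Suc n)))\<^sup>2)) \<longlonglongrightarrow> exp (- ((norm x)\<^sup>2 / 2) * 0\<^sup>2)"
    by (intro tendsto_intros LIMSEQ_inverse_real_of_nat)
  moreover have "\<And>n. W (real (Suc n)) x = exp (- ((norm x)\<^sup>2 / 2) * (inverse (real (Suc n)))\<^sup>2)"
    unfolding W_def by (simp add: field_simps power2_eq_square)
  ultimately show ?thesis by simp
qed

lemma plancherel:
  fixes f :: "'a::euclidean_space \<Rightarrow> complex"
  assumes f: "integrable lborel f"
  shows "(\<integral>\<^sup>+x. ennreal ((cmod (FT f x))\<^sup>2) \<partial>lborel)
     \<le> ennreal ((2 * pi) ^ DIM('a)) * (\<integral>\<^sup>+\<xi>. ennreal ((cmod (f \<xi>))\<^sup>2) \<partial>lborel)"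
proof -
  have fm[measurable]: "f \<in> borel_measurable borel" using f by (auto dest: borel_measurable_integrable)
  have Fm[measurable]: "FT f \<in> borel_measurable borel" by (rule FT_measurable) simp
  define h where "h = (\<lambda>n x. ennreal (W (real (Suc n)) x * (cmod (FT f x))\<^sup>2))"
  have inc: "incseq h"
    unfolding h_def by (intro monoI le_funI ennreal_leI mult_right_mono W_mono) auto
  have sup: "(SUP n. h n x) = ennreal ((cmod (FT f x))\<^sup>2)" for x
  proof -
    have "(\<lambda>n. h n x) \<longlonglongrightarrow> (SUP n. h n x)"
      by (rule LIMSEQ_SUP) (use inc in \<open>auto simp: incseq_def le_fun_def\<close>)
    moreover have "(\<lambda>n. h n x) \<longlonglongrightarrow> ennreal (1 * (cmod (FT f x))\<^sup>2)"
      unfolding h_def by (intro tendsto_ennrealI tendsto_mult_right W_lim)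
    ultimately show ?thesis using LIMSEQ_unique by fastforce
  qed
  have "(\<integral>\<^sup>+x. ennreal ((cmod (FT f x))\<^sup>2) \<partial>lborel) = (\<integral>\<^sup>+x. (SUP n. h n x) \<partial>lborel)"
    by (simp add: sup)
  also have "\<dots> = (SUP n. integral\<^sup>N lborel (h n))"
    by (rule nn_integral_monotone_convergence_SUP[OF inc]) (simp add: h_def)
  also have "\<dots> \<le> ennreal ((2 * pi) ^ DIM('a)) * (\<integral>\<^sup>+\<xi>. ennreal ((cmod (f \<xi>))\<^sup>2) \<partial>lborel)"
    by (rule SUP_least) (unfold h_def, rule plancherel_W[OF f], simp)
  finally show ?thesis .
qed


lemma iexp_add: "iexp (a + b) = iexp a * iexp b"
  by (simp add: distrib_left exp_add)
lemma Re_iexp: "Re (iexp t) = cos t"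
  by (simp add: Re_exp)
lemma Re_kernel: "Re (complex_of_real g * (1 - iexp b) * iexp a) = g * (cos a - cos (a + b))"
proof -
  have "complex_of_real g * (1 - iexp b) * iexp a = complex_of_real g * (iexp a - iexp (a + b))"
    unfolding iexp_add by (simp add: algebra_simps)
  moreover have "Re (complex_of_real g * (iexp a - iexp (a + b))) = g * Re (iexp a - iexp (a + b))" by simp
  moreover have "Re (iexp a - iexp (a + b)) = cos a - cos (a + b)" by (simp only: minus_complex.sel Re_iexp)
  ultimately show ?thesis by (simp only:)
qed

lemma cmod_1_minus_iexp: "(cmod (1 - iexp b))\<^sup>2 = 2 - 2 * cos b"
proof -
  have "(cmod (1 - iexp b))\<^sup>2 = (1 - cos b)\<^sup>2 + (sin b)\<^sup>2"
    by (simp add: cmod_power2 Re_exp Im_exp)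
  also have "\<dots> = 2 - 2 * cos b"
    using sin_cos_squared_add[of b] by (simp add: power2_eq_square algebra_simps)
  finally show ?thesis .
qed

lemma kernel_diff_bound:
  fixes g :: "'a::euclidean_space \<Rightarrow> real"
  assumes g: "integrable lborel g" and c: "c\<^sup>2 * (2 * pi) ^ DIM('a) \<le> 1"
  shows "(\<integral>\<^sup>+x. ennreal ((c * (\<integral>\<xi>. g \<xi> * cos (\<xi> \<bullet> x) \<partial>lborel) - c * (\<integral>\<xi>. g \<xi> * cos (\<xi> \<bullet> (x + z)) \<partial>lborel))\<^sup>2) \<partial>lborel)
     \<le> (\<integral>\<^sup>+\<xi>. ennreal ((g \<xi>)\<^sup>2 * (2 - 2 * cos (\<xi> \<bullet> z))) \<partial>lborel)"
proof -
  have gm[measurable]: "g \<in> borel_measurable borel" using g by (auto dest: borel_measurable_integrable)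
  define f where "f = (\<lambda>\<xi>. complex_of_real (g \<xi>) * (1 - iexp (\<xi> \<bullet> z)))"
  have fm[measurable]: "f \<in> borel_measurable borel" unfolding f_def by measurable
  have intf: "integrable lborel f"
  proof (rule Bochner_Integration.integrable_bound[OF integrable_mult_left[OF integrable_abs[OF g], of 2]])
    show "f \<in> borel_measurable lborel" by simp
    show "AE x in lborel. norm (f x) \<le> norm (\<bar>g x\<bar> * 2)"
    proof (rule AE_I2)
      fix x :: 'a
      have "cmod (1 - iexp (x \<bullet> z)) \<le> cmod 1 + cmod (iexp (x \<bullet> z))" by (rule norm_triangle_ineq4)
      then have "cmod (1 - iexp (x \<bullet> z)) \<le> 2" by simp
      then show "norm (f x) \<le> norm (\<bar>g x\<bar> * 2)"
        by (simp add: f_def norm_mult mult_left_mono)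
    qed
  qed
  have intcos: "integrable lborel (\<lambda>\<xi>. g \<xi> * cos (\<xi> \<bullet> y))" for y :: 'a
    by (rule Bochner_Integration.integrable_bound[OF integrable_abs[OF g]]) (auto simp: abs_mult intro!: mult_left_le)
  have diff: "c * (\<integral>\<xi>. g \<xi> * cos (\<xi> \<bullet> x) \<partial>lborel) - c * (\<integral>\<xi>. g \<xi> * cos (\<xi> \<bullet> (x + z)) \<partial>lborel) = c * Re (FT f x)" for x
  proof -
    have "Re (FT f x) = (\<integral>\<xi>. Re (f \<xi> * iexp (\<xi> \<bullet> x)) \<partial>lborel)"
      unfolding FT_def by (rule integral_Re[symmetric]) (rule integrable_iexp_mult[OF intf])
    also have "\<dots> = (\<integral>\<xi>. g \<xi> * cos (\<xi> \<bullet> x) - g \<xi> * cos (\<xi> \<bullet> (x + z)) \<partial>lborel)"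
      by (rule Bochner_Integration.integral_cong[OF refl]) (simp only: f_def Re_kernel inner_add_right, simp add: right_diff_distrib)
    also have "\<dots> = (\<integral>\<xi>. g \<xi> * cos (\<xi> \<bullet> x) \<partial>lborel) - (\<integral>\<xi>. g \<xi> * cos (\<xi> \<bullet> (x + z)) \<partial>lborel)"
      by (rule Bochner_Integration.integral_diff[OF intcos intcos])
    finally show ?thesis by (simp add: right_diff_distrib)
  qed
  have c0: "ennreal (c\<^sup>2) * ennreal ((2 * pi) ^ DIM('a)) \<le> 1"
  proof -
    have "ennreal (c\<^sup>2) * ennreal ((2 * pi) ^ DIM('a)) = ennreal (c\<^sup>2 * (2 * pi) ^ DIM('a))"
      by (rule ennreal_mult[symmetric]) simp_all
    also have "\<dots> \<le> ennreal 1" using c by (rule ennreal_leI)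
    finally show ?thesis by simp
  qed
  have "(\<integral>\<^sup>+x. ennreal ((c * (\<integral>\<xi>. g \<xi> * cos (\<xi> \<bullet> x) \<partial>lborel) - c * (\<integral>\<xi>. g \<xi> * cos (\<xi> \<bullet> (x + z)) \<partial>lborel))\<^sup>2) \<partial>lborel)
     \<le> (\<integral>\<^sup>+x. ennreal (c\<^sup>2) * ennreal ((cmod (FT f x))\<^sup>2) \<partial>lborel)"
  proof (rule nn_integral_mono)
    fix x :: 'a
    have "(c * Re (FT f x))\<^sup>2 \<le> c\<^sup>2 * (cmod (FT f x))\<^sup>2"
    proof -
      have "\<bar>Re (FT f x)\<bar> \<le> cmod (FT f x)" by (rule abs_Re_le_cmod)
      then have "\<bar>Re (FT f x)\<bar>\<^sup>2 \<le> (cmod (FT f x))\<^sup>2" by (rule power_mono) simp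
      then have "(Re (FT f x))\<^sup>2 \<le> (cmod (FT f x))\<^sup>2" by simp
      then show ?thesis unfolding power_mult_distrib by (rule mult_left_mono) simp
    qed
    then show "ennreal ((c * (\<integral>\<xi>. g \<xi> * cos (\<xi> \<bullet> x) \<partial>lborel) - c * (\<integral>\<xi>. g \<xi> * cos (\<xi> \<bullet> (x + z)) \<partial>lborel))\<^sup>2)
       \<le> ennreal (c\<^sup>2) * ennreal ((cmod (FT f x))\<^sup>2)"
      unfolding diff by (subst ennreal_mult[symmetric]) (simp_all add: ennreal_leI)
  qed
  also have "\<dots> = ennreal (c\<^sup>2) * (\<integral>\<^sup>+x. ennreal ((cmod (FT f x))\<^sup>2) \<partial>lborel)"
    by (rule nn_integral_cmult) (use FT_measurable[OF fm] in measurable)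
  also have "\<dots> \<le> ennreal (c\<^sup>2) * (ennreal ((2 * pi) ^ DIM('a)) * (\<integral>\<^sup>+\<xi>. ennreal ((cmod (f \<xi>))\<^sup>2) \<partial>lborel))"
    by (intro mult_left_mono plancherel[OF intf]) simp
  also have "\<dots> = (ennreal (c\<^sup>2) * ennreal ((2 * pi) ^ DIM('a))) * (\<integral>\<^sup>+\<xi>. ennreal ((cmod (f \<xi>))\<^sup>2) \<partial>lborel)"
    by (simp add: mult.assoc)
  also have "\<dots> \<le> 1 * (\<integral>\<^sup>+\<xi>. ennreal ((cmod (f \<xi>))\<^sup>2) \<partial>lborel)"
    by (intro mult_right_mono c0) simp
  also have "\<dots> = (\<integral>\<^sup>+\<xi>. ennreal ((g \<xi>)\<^sup>2 * (2 - 2 * cos (\<xi> \<bullet> z))) \<partial>lborel)"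
    by (simp add: f_def norm_mult power_mult_distrib cmod_1_minus_iexp)
  finally show ?thesis .
qed

lemma tail_1d_half:
  fixes e :: real assumes e: "e < -1"
  shows "(\<integral>\<^sup>+ y. ennreal (indicator {1..} y * y powr e) \<partial>lborel) < \<infinity>"
proof -
  have "(\<integral>\<^sup>+ y. ennreal (indicator {1..} y * y powr e) \<partial>lborel) = ennreal (-(1 powr (e+1)) / (e+1))"
    by (rule nn_integral_has_integral_lebesgue) (use has_integral_powr_to_inf[OF e, of 1] in auto)
  then show ?thesis by simp
qed

lemma tail_1d:
  fixes q :: real assumes q: "q > 1/2"
  shows "(\<integral>\<^sup>+ y. ennreal ((1 + y\<^sup>2) powr (-q)) \<partial>lborel) < \<infinity>"
proof -
  define e where "e = -2 * q"
  have e: "e < -1" using q by (simp add: e_def)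
  define h where "h = (\<lambda>y::real. ennreal (indicator {-1..1} y) + ennreal (indicator {1..} y * y powr e)
      + ennreal (indicator {1..} (-y) * (-y) powr e))"
  have le: "ennreal ((1 + y\<^sup>2) powr (-q)) \<le> h y" for y
  proof -
    have key: "(1 + y\<^sup>2) powr (-q) \<le> \<bar>y\<bar> powr e" if "1 \<le> \<bar>y\<bar>"
    proof -
      have "(1 + y\<^sup>2) powr (-q) \<le> (\<bar>y\<bar> powr 2) powr (-q)"
        using that q by (intro powr_mono2') (auto simp: powr_realpow')
      also have "\<dots> = \<bar>y\<bar> powr e" by (simp only: powr_powr e_def, simp)
      finally show ?thesis .
    qed
    consider "y \<in> {-1..1}" | "1 < y" | "y < -1" by force
    then show ?thesis
    proof cases
      case 1
      have "1 \<le> (1 + y\<^sup>2) powr q" by (rule ge_one_powr_ge_zero) (use q in auto)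
      then have "(1 + y\<^sup>2) powr (-q) \<le> 1" by (simp add: powr_minus inverse_le_1_iff)
      then have "ennreal ((1 + y\<^sup>2) powr (-q)) \<le> 1" by (simp add: ennreal_le_1)
      also have "(1::ennreal) \<le> h y" using 1 unfolding h_def by simp
      finally show ?thesis .
    next
      case 2
      then have "(1 + y\<^sup>2) powr (-q) \<le> y powr e" using key by simp
      then show ?thesis using 2 by (simp add: h_def ennreal_leI)
    next
      case 3
      then have "(1 + y\<^sup>2) powr (-q) \<le> (-y) powr e" using key by simp
      then show ?thesis using 3 by (simp add: h_def ennreal_leI)
    qed
  qed
  have reflx: "(\<integral>\<^sup>+ y. ennreal (indicator {1..} (-y) * (-y) powr e) \<partial>lborel) = (\<integral>\<^sup>+ y. ennreal (indicator {1..} y * y powr e) \<partial>lborel)"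
    using nn_integral_real_affine[of "\<lambda>y. ennreal (indicator {1..} y * y powr e)" "-1" 0] by simp
  have "(\<integral>\<^sup>+ y. ennreal ((1 + y\<^sup>2) powr (-q)) \<partial>lborel) \<le> (\<integral>\<^sup>+ y. h y \<partial>lborel)"
    by (rule nn_integral_mono) (rule le)
  also have "\<dots> = (\<integral>\<^sup>+ y. ennreal (indicator {-1..1::real} y) \<partial>lborel) + (\<integral>\<^sup>+ y. ennreal (indicator {1..} y * y powr e) \<partial>lborel)
      + (\<integral>\<^sup>+ y. ennreal (indicator {1..} (-y) * (-y) powr e) \<partial>lborel)"
  proof -
    have m1: "(\<lambda>y::real. ennreal (indicator {-1..1} y)) \<in> borel_measurable lborel" by measurable
    have m2: "(\<lambda>y::real. ennreal (indicator {1..} y * y powr e)) \<in> borel_measurable lborel" by measurable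
    have m3: "(\<lambda>y::real. ennreal (indicator {1..} (-y) * (-y) powr e)) \<in> borel_measurable lborel" by measurable
    have m12: "(\<lambda>y::real. ennreal (indicator {-1..1} y) + ennreal (indicator {1..} y * y powr e)) \<in> borel_measurable lborel"
      using m1 m2 by (rule borel_measurable_add)
    show ?thesis unfolding h_def
      by (simp only: nn_integral_add[OF m12 m3] nn_integral_add[OF m1 m2])
  qed
  also have "\<dots> < \<infinity>"
  proof -
    have "(\<integral>\<^sup>+ y. ennreal (indicator {-1..1::real} y) \<partial>lborel) = 2"
      by (simp add: ennreal_indicator)
    then show ?thesis unfolding reflx using tail_1d_half[OF e] by (simp add: less_top[symmetric])
  qed
  finally show ?thesis .
qed


lemma tail_pointwise:
  fixes \<xi> :: "'a::euclidean_space" and p :: real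
  assumes p: "0 < p" and n: "1 \<le> norm \<xi>"
  shows "norm \<xi> powr (-p) \<le> 2 powr (p/2) * (\<Prod>b\<in>Basis. (1 + (\<xi> \<bullet> b)\<^sup>2) powr (- (p / (2 * DIM('a)))))"
proof -
  define d where "d = DIM('a)"
  define q where "q = p / (2 * d)"
  have d0: "0 < d" by (simp add: d_def)
  have q0: "0 < q" using p d0 by (simp add: q_def)
  define PP where "PP = (\<Prod>b\<in>(Basis::'a set). 1 + (\<xi> \<bullet> b)\<^sup>2)"
  have PP0: "0 < PP" unfolding PP_def by (intro prod_pos) (simp add: add_pos_nonneg)
  have PPle: "PP \<le> (1 + (norm \<xi>)\<^sup>2) ^ d"
  proof -
    have "PP \<le> (\<Prod>b\<in>(Basis::'a set). 1 + (norm \<xi>)\<^sup>2)"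
      unfolding PP_def
    proof (intro prod_mono conjI)
      fix b :: 'a assume b: "b \<in> Basis"
      have "\<bar>\<xi> \<bullet> b\<bar> \<le> norm \<xi>" using Basis_le_norm[OF b] .
      then have "\<bar>\<xi> \<bullet> b\<bar>\<^sup>2 \<le> (norm \<xi>)\<^sup>2" by (rule power_mono) simp
      then show "1 + (\<xi> \<bullet> b)\<^sup>2 \<le> 1 + (norm \<xi>)\<^sup>2" by simp
      show "0 \<le> 1 + (\<xi> \<bullet> b)\<^sup>2" by (simp add: add_nonneg_nonneg)
    qed
    also have "\<dots> = (1 + (norm \<xi>)\<^sup>2) ^ d" by (simp add: d_def)
    finally show ?thesis .
  qed
  have "(\<Prod>b\<in>(Basis::'a set). (1 + (\<xi> \<bullet> b)\<^sup>2) powr (- q)) = PP powr (- q)"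
    unfolding PP_def by (rule prod_powr_distrib[symmetric])
  also have "\<dots> \<ge> ((1 + (norm \<xi>)\<^sup>2) ^ d) powr (- q)"
    using q0 PP0 PPle by (intro powr_mono2') auto
  finally have A: "((1 + (norm \<xi>)\<^sup>2) ^ d) powr (- q) \<le> (\<Prod>b\<in>(Basis::'a set). (1 + (\<xi> \<bullet> b)\<^sup>2) powr (- q))" .
  have B: "((1 + (norm \<xi>)\<^sup>2) ^ d) powr (- q) = (1 + (norm \<xi>)\<^sup>2) powr (- (p/2))"
  proof -
    have pos: "0 < 1 + (norm \<xi>)\<^sup>2" by (simp add: add_pos_nonneg)
    have "((1 + (norm \<xi>)\<^sup>2) ^ d) = (1 + (norm \<xi>)\<^sup>2) powr (real d)"
      using pos by (simp add: powr_realpow)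
    then have "((1 + (norm \<xi>)\<^sup>2) ^ d) powr (- q) = (1 + (norm \<xi>)\<^sup>2) powr (real d * (- q))"
      by (simp add: powr_powr)
    also have "real d * (- q) = - (p/2)" using d0 by (simp add: q_def)
    finally show ?thesis .
  qed
  have C: "(2 * (norm \<xi>)\<^sup>2) powr (- (p/2)) \<le> (1 + (norm \<xi>)\<^sup>2) powr (- (p/2))"
  proof (rule powr_mono2')
    show "- (p/2) \<le> 0" using p by simp
    show "0 < 1 + (norm \<xi>)\<^sup>2" by (simp add: add_pos_nonneg)
    have "1 \<le> (norm \<xi>)\<^sup>2" using n by (simp add: one_le_power)
    then show "1 + (norm \<xi>)\<^sup>2 \<le> 2 * (norm \<xi>)\<^sup>2" by simp
  qed
  have D: "(2 * (norm \<xi>)\<^sup>2) powr (- (p/2)) = 2 powr (- (p/2)) * norm \<xi> powr (-p)"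
  proof -
    have h: "(norm \<xi>)\<^sup>2 = norm \<xi> powr 2" using n by (simp add: powr_realpow')
    have "((norm \<xi>)\<^sup>2) powr (- (p/2)) = norm \<xi> powr (2 * (- (p/2)))" by (simp only: h powr_powr)
    then have "((norm \<xi>)\<^sup>2) powr (- (p/2)) = norm \<xi> powr (-p)" by simp
    then show ?thesis by (simp add: powr_mult)
  qed
  have "norm \<xi> powr (-p) = 2 powr (p/2) * (2 * (norm \<xi>)\<^sup>2) powr (- (p/2))"
    unfolding D by (simp add: powr_minus)
  also have "\<dots> \<le> 2 powr (p/2) * (\<Prod>b\<in>(Basis::'a set). (1 + (\<xi> \<bullet> b)\<^sup>2) powr (- q))"
    using A B C by (intro mult_left_mono) auto
  finally show ?thesis by (simp add: q_def d_def)
qed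

lemma tail_nd:
  fixes p :: real
  assumes p: "real DIM('a::euclidean_space) < p"
  shows "(\<integral>\<^sup>+ \<xi>. ennreal (indicator {\<xi>::'a. 1 \<le> norm \<xi>} \<xi> * norm \<xi> powr (-p)) \<partial>lborel) < \<infinity>"
proof -
  define q where "q = p / (2 * DIM('a))"
  have q: "q > 1/2" using p by (simp add: q_def field_simps)
  have p0: "0 < p" using p by (rule le_less_trans[rotated]) simp
  have "(\<integral>\<^sup>+ \<xi>. ennreal (indicator {\<xi>::'a. 1 \<le> norm \<xi>} \<xi> * norm \<xi> powr (-p)) \<partial>lborel)
     \<le> (\<integral>\<^sup>+ (\<xi>::'a). ennreal (2 powr (p/2)) * (\<Prod>b\<in>Basis. ennreal ((1 + (\<xi> \<bullet> b)\<^sup>2) powr (- q))) \<partial>lborel)"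
  proof (rule nn_integral_mono)
    fix \<xi> :: 'a
    have "indicator {\<xi>. 1 \<le> norm \<xi>} \<xi> * norm \<xi> powr (-p) \<le> 2 powr (p/2) * (\<Prod>b\<in>Basis. (1 + (\<xi> \<bullet> b)\<^sup>2) powr (- q))"
      using tail_pointwise[OF p0, of \<xi>] by (auto simp: indicator_def q_def intro!: mult_nonneg_nonneg prod_nonneg)
    then have "ennreal (indicator {\<xi>. 1 \<le> norm \<xi>} \<xi> * norm \<xi> powr (-p)) \<le> ennreal (2 powr (p/2) * (\<Prod>b\<in>Basis. (1 + (\<xi> \<bullet> b)\<^sup>2) powr (- q)))"
      by (rule ennreal_leI)
    also have "\<dots> = ennreal (2 powr (p/2)) * (\<Prod>b\<in>Basis. ennreal ((1 + (\<xi> \<bullet> b)\<^sup>2) powr (- q)))"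
      by (simp add: ennreal_mult prod_ennreal prod_nonneg)
    finally show "ennreal (indicator {\<xi>. 1 \<le> norm \<xi>} \<xi> * norm \<xi> powr (-p)) \<le> ennreal (2 powr (p/2)) * (\<Prod>b\<in>Basis. ennreal ((1 + (\<xi> \<bullet> b)\<^sup>2) powr (- q)))" .
  qed
  also have "\<dots> = ennreal (2 powr (p/2)) * (\<integral>\<^sup>+ (\<xi>::'a). (\<Prod>b\<in>Basis. ennreal ((1 + (\<xi> \<bullet> b)\<^sup>2) powr (- q))) \<partial>lborel)"
    by (rule nn_integral_cmult) measurable
  also have "(\<integral>\<^sup>+ (\<xi>::'a). (\<Prod>b\<in>Basis. ennreal ((1 + (\<xi> \<bullet> b)\<^sup>2) powr (- q))) \<partial>lborel)
      = (\<Prod>b\<in>(Basis::'a set). (\<integral>\<^sup>+ y. ennreal ((1 + y\<^sup>2) powr (- q)) \<partial>lborel))"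
    by (rule nn_integral_lborel_prod) auto
  also have "ennreal (2 powr (p/2)) * \<dots> < \<infinity>"
    using tail_1d[OF q] by (simp add: ennreal_mult_less_top power_less_top_ennreal)
  finally show ?thesis .
qed


lemma cos_diff_bound:
  fixes \<theta> \<alpha> :: real assumes a: "0 < \<alpha>" "\<alpha> \<le> 1"
  shows "2 - 2 * cos \<theta> \<le> 4 * \<bar>\<theta>\<bar> powr (2 * \<alpha>)"
proof (cases "\<bar>\<theta>\<bar> \<le> 1")
  case True
  have "cos \<theta> = cos (2 * (\<theta>/2))" by simp
  also have "\<dots> = 1 - 2 * (sin (\<theta>/2))\<^sup>2" by (rule cos_double_sin)
  finally have c: "2 - 2 * cos \<theta> = 4 * (sin (\<theta>/2))\<^sup>2" by simp
  have "(sin (\<theta>/2))\<^sup>2 \<le> (\<theta>/2)\<^sup>2"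
    using abs_sin_x_le_abs_x[of "\<theta>/2"] by (metis abs_le_square_iff)
  also have "\<dots> \<le> \<theta>\<^sup>2" by (simp add: power_divide)
  also have "\<theta>\<^sup>2 = \<bar>\<theta>\<bar> powr 2"
    by (cases "\<theta> = 0") (simp_all add: powr_realpow')
  also have "\<dots> \<le> \<bar>\<theta>\<bar> powr (2 * \<alpha>)"
    using True a by (intro powr_mono') auto
  finally show ?thesis using c by simp
next
  case False
  have "2 - 2 * cos \<theta> \<le> 4" using cos_ge_minus_one[of \<theta>] by linarith
  also have "4 \<le> 4 * \<bar>\<theta>\<bar> powr (2 * \<alpha>)"
    using False a ge_one_powr_ge_zero[of "\<bar>\<theta>\<bar>" "2 * \<alpha>"] by simp
  finally show ?thesis .
qed

lemma cos_inner_bound: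
  fixes \<xi> z :: "'a::euclidean_space" assumes a: "0 < \<alpha>" "\<alpha> \<le> 1"
  shows "2 - 2 * cos (\<xi> \<bullet> z) \<le> 4 * norm z powr (2 * \<alpha>) * norm \<xi> powr (2 * \<alpha>)"
proof -
  have "2 - 2 * cos (\<xi> \<bullet> z) \<le> 4 * \<bar>\<xi> \<bullet> z\<bar> powr (2 * \<alpha>)" by (rule cos_diff_bound[OF a])
  also have "\<bar>\<xi> \<bullet> z\<bar> powr (2 * \<alpha>) \<le> (norm \<xi> * norm z) powr (2 * \<alpha>)"
    using a by (intro powr_mono2 Cauchy_Schwarz_ineq2) auto
  also have "\<dots> = norm z powr (2 * \<alpha>) * norm \<xi> powr (2 * \<alpha>)" by (simp add: powr_mult)
  finally show ?thesis by simp
qed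

lemma exp_nn_integral_le:
  fixes a t :: real assumes a: "0 < a"
  shows "(\<integral>\<^sup>+ s. ennreal (exp (- (s/4) * a)) * indicator {0..t} s \<partial>lborel) \<le> ennreal (4 / a)"
proof -
  have "(\<integral>\<^sup>+ s. ennreal (exp (- (s/4) * a)) * indicator {0..t} s \<partial>lborel)
      \<le> (\<integral>\<^sup>+ s. ennreal (4 / a) * ennreal (exponential_density (a/4) s) \<partial>lborel)"
  proof (rule nn_integral_mono)
    fix s :: real
    show "ennreal (exp (- (s/4) * a)) * indicator {0..t} s \<le> ennreal (4 / a) * ennreal (exponential_density (a/4) s)"
    proof (cases "s \<in> {0..t}")
      case True
      then have "exp (- (s/4) * a) = 4 / a * exponential_density (a/4) s"
        using a by (simp add: exponential_density_def field_simps)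
      then show ?thesis using True a by (simp add: ennreal_mult[symmetric])
    qed simp
  qed
  also have "\<dots> = ennreal (4 / a) * (\<integral>\<^sup>+ s. ennreal (exponential_density (a/4) s) \<partial>lborel)"
    by (rule nn_integral_cmult) measurable
  also have "(\<integral>\<^sup>+ s. ennreal (exponential_density (a/4) s) \<partial>lborel) = 1"
  proof -
    interpret prob_space "density lborel (exponential_density (a/4))"
      using a by (intro prob_space_exponential_density) simp
    have "emeasure (density lborel (exponential_density (a/4))) UNIV = 1"
      using emeasure_space_1 by simp
    then show ?thesis by (simp add: emeasure_density)
  qed
  finally show ?thesis by simp
qed


lemma const_bound: "((2 * pi) powr (- real DIM('a::euclidean_space)))\<^sup>2 * (2 * pi) ^ DIM('a) \<le> 1"
proof -
  define d where "d = real DIM('a)"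
  have pp: "(0::real) < 2 * pi" by simp
  have "(2 * pi) ^ DIM('a) = (2 * pi) powr d" unfolding d_def using pp by (simp add: powr_realpow)
  then have "((2 * pi) powr (- d))\<^sup>2 * (2 * pi) ^ DIM('a) = (2 * pi) powr (- d)"
    by (simp add: power2_eq_square powr_add[symmetric])
  also have "\<dots> \<le> 1"
  proof -
    have "1 \<le> (2 * pi) powr d" using pi_gt3 by (intro ge_one_powr_ge_zero) (auto simp: d_def)
    then show ?thesis by (simp add: powr_minus inverse_le_1_iff)
  qed
  finally show ?thesis unfolding d_def .
qed

lemma integrable_gs:
  fixes P :: "'a::euclidean_space \<Rightarrow> real"
  assumes Pm[measurable]: "P \<in> borel_measurable borel"
    and Plow: "\<And>\<xi>. (norm \<xi>)\<^sup>2 - 9/2 \<le> P \<xi>" and s: "0 < s"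
  shows "integrable lborel (\<lambda>\<xi>. exp (- (s/8) * P \<xi>))"
proof (rule Bochner_Integration.integrable_bound[OF integrable_mult_left[OF integrable_W[of "2 / sqrt s"], of "exp (9 * s / 16)"]])
  show "0 < 2 / sqrt s" using s by simp
  show "(\<lambda>\<xi>. exp (- (s/8) * P \<xi>)) \<in> borel_measurable lborel" by measurable
  show "AE \<xi> in lborel. norm (exp (- (s/8) * P \<xi>)) \<le> norm (W (2 / sqrt s) \<xi> * exp (9 * s / 16))"
  proof (rule AE_I2)
    fix \<xi> :: 'a
    have "- (s/8) * P \<xi> \<le> - (norm \<xi>)\<^sup>2 / (2 * (2 / sqrt s)\<^sup>2) + 9 * s / 16"
    proof -
      have "- (s/8) * P \<xi> \<le> - (s/8) * ((norm \<xi>)\<^sup>2 - 9/2)"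
        using Plow[of \<xi>] s by (intro mult_left_mono_neg) auto
      also have "\<dots> = - (norm \<xi>)\<^sup>2 / (2 * (2 / sqrt s)\<^sup>2) + 9 * s / 16"
        using s by (simp add: power_divide field_simps)
      finally show ?thesis .
    qed
    then have "exp (- (s/8) * P \<xi>) \<le> exp (- (norm \<xi>)\<^sup>2 / (2 * (2 / sqrt s)\<^sup>2)) * exp (9 * s / 16)"
      by (simp add: exp_add[symmetric])
    then show "norm (exp (- (s/8) * P \<xi>)) \<le> norm (W (2 / sqrt s) \<xi> * exp (9 * s / 16))"
      by (simp add: W_def)
  qed
qed


lemma inner_bound:
  fixes P :: "'a::euclidean_space \<Rightarrow> real" and z :: 'a
  assumes Pm[measurable]: "P \<in> borel_measurable borel"
    and Plow: "\<And>\<xi>. (norm \<xi>)\<^sup>2 - 9/2 \<le> P \<xi>" and s: "0 < s"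
    and a: "0 < \<alpha>" "\<alpha> \<le> 1"
  shows "(\<integral>\<^sup>+ x. ennreal (((2 * pi) powr (- real DIM('a)) * (\<integral>\<xi>. exp (- (s/8) * P \<xi>) * cos (\<xi> \<bullet> x) \<partial>lborel)
            - (2 * pi) powr (- real DIM('a)) * (\<integral>\<xi>. exp (- (s/8) * P \<xi>) * cos (\<xi> \<bullet> (x + z)) \<partial>lborel))\<^sup>2) \<partial>lborel)
     \<le> ennreal (4 * norm z powr (2 * \<alpha>)) * (\<integral>\<^sup>+ \<xi>. ennreal (exp (- (s/4) * P \<xi>) * norm \<xi> powr (2 * \<alpha>)) \<partial>lborel)"
proof -
  have "(\<integral>\<^sup>+ x. ennreal (((2 * pi) powr (- real DIM('a)) * (\<integral>\<xi>. exp (- (s/8) * P \<xi>) * cos (\<xi> \<bullet> x) \<partial>lborel)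
            - (2 * pi) powr (- real DIM('a)) * (\<integral>\<xi>. exp (- (s/8) * P \<xi>) * cos (\<xi> \<bullet> (x + z)) \<partial>lborel))\<^sup>2) \<partial>lborel)
      \<le> (\<integral>\<^sup>+\<xi>. ennreal ((exp (- (s/8) * P \<xi>))\<^sup>2 * (2 - 2 * cos (\<xi> \<bullet> z))) \<partial>lborel)"
    by (rule kernel_diff_bound[OF integrable_gs[OF Pm Plow s] const_bound])
  also have "\<dots> \<le> (\<integral>\<^sup>+\<xi>. ennreal (4 * norm z powr (2 * \<alpha>)) * ennreal (exp (- (s/4) * P \<xi>) * norm \<xi> powr (2 * \<alpha>)) \<partial>lborel)"
  proof (rule nn_integral_mono)
    fix \<xi> :: 'a
    have e: "(exp (- (s/8) * P \<xi>))\<^sup>2 = exp (- (s/4) * P \<xi>)"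
      using exp_double[of "- (s/8) * P \<xi>"] by simp
    have "(exp (- (s/8) * P \<xi>))\<^sup>2 * (2 - 2 * cos (\<xi> \<bullet> z)) \<le> exp (- (s/4) * P \<xi>) * (4 * norm z powr (2 * \<alpha>) * norm \<xi> powr (2 * \<alpha>))"
      unfolding e by (intro mult_left_mono cos_inner_bound[OF a]) simp
    then have "ennreal ((exp (- (s/8) * P \<xi>))\<^sup>2 * (2 - 2 * cos (\<xi> \<bullet> z))) \<le> ennreal (4 * norm z powr (2 * \<alpha>) * (exp (- (s/4) * P \<xi>) * norm \<xi> powr (2 * \<alpha>)))"
      by (intro ennreal_leI) (simp add: mult_ac)
    also have "\<dots> = ennreal (4 * norm z powr (2 * \<alpha>)) * ennreal (exp (- (s/4) * P \<xi>) * norm \<xi> powr (2 * \<alpha>))"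
      by (rule ennreal_mult) auto
    finally show "ennreal ((exp (- (s/8) * P \<xi>))\<^sup>2 * (2 - 2 * cos (\<xi> \<bullet> z))) \<le> ennreal (4 * norm z powr (2 * \<alpha>)) * ennreal (exp (- (s/4) * P \<xi>) * norm \<xi> powr (2 * \<alpha>))" .
  qed
  also have "\<dots> = ennreal (4 * norm z powr (2 * \<alpha>)) * (\<integral>\<^sup>+ \<xi>. ennreal (exp (- (s/4) * P \<xi>) * norm \<xi> powr (2 * \<alpha>)) \<partial>lborel)"
    by (rule nn_integral_cmult) measurable
  finally show ?thesis .
qed


lemma E_bound:
  fixes P :: "'a::euclidean_space \<Rightarrow> real" and \<xi> :: 'a
  assumes P0: "\<And>\<xi>. 0 \<le> P \<xi>" and Pbig: "\<And>\<xi>. 2 \<le> norm \<xi> \<Longrightarrow> (norm \<xi>)^4 / 4 \<le> P \<xi>"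
    and a: "0 < \<alpha>" "\<alpha> \<le> 1" and t: "0 < t"
  shows "ennreal (norm \<xi> powr (2 * \<alpha>)) * (\<integral>\<^sup>+ s. ennreal (exp (- (s/4) * P \<xi>)) * indicator {0..t} s \<partial>lborel)
     \<le> ennreal t * ennreal (4 * indicator (cball 0 2) \<xi>) + ennreal (16 * (indicator {\<xi>. 1 \<le> norm \<xi>} \<xi> * norm \<xi> powr (- (4 - 2 * \<alpha>))))"
proof (cases "norm \<xi> \<le> 2")
  case True
  have E: "(\<integral>\<^sup>+ s. ennreal (exp (- (s/4) * P \<xi>)) * indicator {0..t} s \<partial>lborel) \<le> ennreal t"
  proof -
    have "(\<integral>\<^sup>+ s. ennreal (exp (- (s/4) * P \<xi>)) * indicator {0..t} s \<partial>lborel) \<le> (\<integral>\<^sup>+ s. indicator {0..t} s \<partial>lborel)"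
    proof (rule nn_integral_mono)
      fix s :: real
      show "ennreal (exp (- (s/4) * P \<xi>)) * indicator {0..t} s \<le> indicator {0..t} s"
      proof (cases "s \<in> {0..t}")
        case True
        then have "exp (- (s/4) * P \<xi>) \<le> 1" using P0[of \<xi>] by (simp add: mult_nonneg_nonneg)
        then show ?thesis using True by (simp add: ennreal_le_1)
      qed simp
    qed
    also have "\<dots> = ennreal t" using t by simp
    finally show ?thesis .
  qed
  have N: "norm \<xi> powr (2 * \<alpha>) \<le> 4"
  proof -
    have "norm \<xi> powr (2 * \<alpha>) \<le> 2 powr (2 * \<alpha>)" using True a by (intro powr_mono2) auto
    also have "\<dots> \<le> 2 powr 2" using a by (intro powr_mono) auto
    finally show ?thesis by simp
  qed
  have "ennreal (norm \<xi> powr (2 * \<alpha>)) * (\<integral>\<^sup>+ s. ennreal (exp (- (s/4) * P \<xi>)) * indicator {0..t} s \<partial>lborel) \<le> ennreal 4 * ennreal t"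
    by (intro mult_mono E ennreal_leI N) auto
  also have "\<dots> = ennreal t * ennreal (4 * indicator (cball 0 2) \<xi>)"
    using True by (simp add: mult.commute)
  also have "\<dots> \<le> ennreal t * ennreal (4 * indicator (cball 0 2) \<xi>) + ennreal (16 * (indicator {\<xi>. 1 \<le> norm \<xi>} \<xi> * norm \<xi> powr (- (4 - 2 * \<alpha>))))"
    by simp
  finally show ?thesis .
next
  case False
  then have n2: "2 < norm \<xi>" by simp
  have n0: "0 < norm \<xi>" using n2 by linarith
  have PP: "(norm \<xi>)^4 / 4 \<le> P \<xi>" using Pbig n2 by simp
  have Ppos: "0 < P \<xi>" using PP n0 by (smt (verit) divide_pos_pos zero_less_power)
  have E: "(\<integral>\<^sup>+ s. ennreal (exp (- (s/4) * P \<xi>)) * indicator {0..t} s \<partial>lborel) \<le> ennreal (16 / (norm \<xi>)^4)"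
  proof -
    have "4 / P \<xi> \<le> 16 / (norm \<xi>)^4"
    proof -
      have "4 / P \<xi> \<le> 4 / ((norm \<xi>)^4 / 4)" using PP n0 Ppos by (intro divide_left_mono) (auto intro!: mult_pos_pos)
      then show ?thesis by simp
    qed
    then show ?thesis using exp_nn_integral_le[OF Ppos, of t] by (meson ennreal_leI order_trans)
  qed
  have "ennreal (norm \<xi> powr (2 * \<alpha>)) * (\<integral>\<^sup>+ s. ennreal (exp (- (s/4) * P \<xi>)) * indicator {0..t} s \<partial>lborel)
      \<le> ennreal (norm \<xi> powr (2 * \<alpha>)) * ennreal (16 / (norm \<xi>)^4)"
    by (intro mult_left_mono E) simp
  also have "\<dots> = ennreal (16 * (norm \<xi> powr (2 * \<alpha>) / (norm \<xi>)^4))"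
    by (simp add: ennreal_mult[symmetric] mult_ac)
  also have "norm \<xi> powr (2 * \<alpha>) / (norm \<xi>)^4 = norm \<xi> powr (- (4 - 2 * \<alpha>))"
  proof -
    have h: "(norm \<xi>)^4 = norm \<xi> powr 4" using n0 by (simp add: powr_realpow)
    show ?thesis unfolding h powr_diff[symmetric] by simp
  qed
  also have "ennreal (16 * norm \<xi> powr (- (4 - 2 * \<alpha>))) \<le> ennreal t * ennreal (4 * indicator (cball 0 2) \<xi>) + ennreal (16 * (indicator {\<xi>. 1 \<le> norm \<xi>} \<xi> * norm \<xi> powr (- (4 - 2 * \<alpha>))))"
    using n2 by simp
  finally show ?thesis .
qed


lemma main_generic:
  fixes P :: "'a::euclidean_space \<Rightarrow> real" and \<alpha> :: real
  assumes Pm[measurable]: "P \<in> borel_measurable borel"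
    and P0: "\<And>\<xi>. 0 \<le> P \<xi>"
    and Plow: "\<And>\<xi>. (norm \<xi>)\<^sup>2 - 9/2 \<le> P \<xi>"
    and Pbig: "\<And>\<xi>. 2 \<le> norm \<xi> \<Longrightarrow> (norm \<xi>)^4 / 4 \<le> P \<xi>"
    and a: "0 < \<alpha>" "\<alpha> \<le> 1" "real DIM('a) < 4 - 2 * \<alpha>"
  shows "\<exists>C>0. \<forall>t>0. \<forall>z::'a.
    (\<integral>\<^sup>+ s \<in> {0..t}. (\<integral>\<^sup>+ x. ennreal (((2 * pi) powr (- real DIM('a)) * (\<integral>\<xi>. exp (- (s/8) * P \<xi>) * cos (\<xi> \<bullet> x) \<partial>lborel)
            - (2 * pi) powr (- real DIM('a)) * (\<integral>\<xi>. exp (- (s/8) * P \<xi>) * cos (\<xi> \<bullet> (x + z)) \<partial>lborel))\<^sup>2) \<partial>lborel) \<partial>lborel)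
      \<le> ennreal (C * norm z powr (2 * \<alpha>) * max 1 (t / 4))"
proof -
  define A1 where "A1 = emeasure lborel (cball (0::'a) 2)"
  define A2 where "A2 = (\<integral>\<^sup>+ \<xi>. ennreal (indicator {\<xi>::'a. 1 \<le> norm \<xi>} \<xi> * norm \<xi> powr (- (4 - 2 * \<alpha>))) \<partial>lborel)"
  have "A1 < \<infinity>" unfolding A1_def by (rule emeasure_bounded_finite) simp
  then obtain a1 where a1: "0 \<le> a1" "A1 = ennreal a1" by (cases A1) auto
  have "A2 < \<infinity>" unfolding A2_def by (rule tail_nd) (use a in simp)
  then obtain a2 where a2: "0 \<le> a2" "A2 = ennreal a2" by (cases A2) auto
  have mc[measurable]: "cball (0::'a) 2 \<in> sets borel" by (rule borel_closed) simp
  have mt[measurable]: "{\<xi>::'a. 1 \<le> norm \<xi>} \<in> sets borel"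
    by (rule borel_closed, rule closed_Collect_le) (intro continuous_intros)+
  define C where "C = 64 * a1 + 64 * a2 + 1"
  have C0: "0 < C" using a1 a2 by (simp add: C_def)
  have main: "(\<integral>\<^sup>+ s \<in> {0..t}. (\<integral>\<^sup>+ x. ennreal (((2 * pi) powr (- real DIM('a)) * (\<integral>\<xi>. exp (- (s/8) * P \<xi>) * cos (\<xi> \<bullet> x) \<partial>lborel)
            - (2 * pi) powr (- real DIM('a)) * (\<integral>\<xi>. exp (- (s/8) * P \<xi>) * cos (\<xi> \<bullet> (x + z)) \<partial>lborel))\<^sup>2) \<partial>lborel) \<partial>lborel)
      \<le> ennreal (C * norm z powr (2 * \<alpha>) * max 1 (t / 4))" if t: "0 < t" for t :: real and z :: 'a
  proof -
    define B where "B = 4 * norm z powr (2 * \<alpha>)"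
    have B0: "0 \<le> B" by (simp add: B_def)
    define E where "E = (\<lambda>\<xi>. (\<integral>\<^sup>+ s. ennreal (exp (- (s/4) * P \<xi>)) * indicator {0..t} s \<partial>lborel))"
    have "(\<integral>\<^sup>+ s \<in> {0..t}. (\<integral>\<^sup>+ x. ennreal (((2 * pi) powr (- real DIM('a)) * (\<integral>\<xi>. exp (- (s/8) * P \<xi>) * cos (\<xi> \<bullet> x) \<partial>lborel)
            - (2 * pi) powr (- real DIM('a)) * (\<integral>\<xi>. exp (- (s/8) * P \<xi>) * cos (\<xi> \<bullet> (x + z)) \<partial>lborel))\<^sup>2) \<partial>lborel) \<partial>lborel)
        \<le> (\<integral>\<^sup>+ s. ennreal B * (\<integral>\<^sup>+ \<xi>. ennreal (exp (- (s/4) * P \<xi>) * norm \<xi> powr (2 * \<alpha>)) \<partial>lborel) * indicator {0..t} s \<partial>lborel)"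
    proof (rule nn_integral_mono_AE)
      show "AE s in lborel. (\<integral>\<^sup>+ x. ennreal (((2 * pi) powr (- real DIM('a)) * (\<integral>\<xi>. exp (- (s/8) * P \<xi>) * cos (\<xi> \<bullet> x) \<partial>lborel)
            - (2 * pi) powr (- real DIM('a)) * (\<integral>\<xi>. exp (- (s/8) * P \<xi>) * cos (\<xi> \<bullet> (x + z)) \<partial>lborel))\<^sup>2) \<partial>lborel) * indicator {0..t} s
          \<le> ennreal B * (\<integral>\<^sup>+ \<xi>. ennreal (exp (- (s/4) * P \<xi>) * norm \<xi> powr (2 * \<alpha>)) \<partial>lborel) * indicator {0..t} s"
        using AE_lborel_singleton[of "0::real"]
      proof eventually_elim
        case (elim s)
        show ?case
        proof (cases "s \<in> {0..t}")
          case True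
          then have s: "0 < s" using elim by auto
          show ?thesis using True inner_bound[OF Pm Plow s a(1,2), of z] by (simp add: B_def)
        qed simp
      qed
    qed
    also have "\<dots> = ennreal B * (\<integral>\<^sup>+ s. (\<integral>\<^sup>+ \<xi>. ennreal (exp (- (s/4) * P \<xi>) * norm \<xi> powr (2 * \<alpha>)) * indicator {0..t} s \<partial>lborel) \<partial>lborel)"
      by (subst nn_integral_cmult[symmetric]) (measurable, auto simp: nn_integral_multc mult.assoc intro!: nn_integral_cong)
    finally have L1: "(\<integral>\<^sup>+ s \<in> {0..t}. (\<integral>\<^sup>+ x. ennreal (((2 * pi) powr (- real DIM('a)) * (\<integral>\<xi>. exp (- (s/8) * P \<xi>) * cos (\<xi> \<bullet> x) \<partial>lborel)
            - (2 * pi) powr (- real DIM('a)) * (\<integral>\<xi>. exp (- (s/8) * P \<xi>) * cos (\<xi> \<bullet> (x + z)) \<partial>lborel))\<^sup>2) \<partial>lborel) \<partial>lborel) \<le> ennreal B * (\<integral>\<^sup>+ s. (\<integral>\<^sup>+ \<xi>. ennreal (exp (- (s/4) * P \<xi>) * norm \<xi> powr (2 * \<alpha>)) * indicator {0..t} s \<partial>lborel) \<partial>lborel)" .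
    have "(\<integral>\<^sup>+ s. (\<integral>\<^sup>+ \<xi>. ennreal (exp (- (s/4) * P \<xi>) * norm \<xi> powr (2 * \<alpha>)) * indicator {0..t} s \<partial>lborel) \<partial>lborel)
       = (\<integral>\<^sup>+ \<xi>. (\<integral>\<^sup>+ s. ennreal (exp (- (s/4) * P \<xi>) * norm \<xi> powr (2 * \<alpha>)) * indicator {0..t} s \<partial>lborel) \<partial>lborel)"
      by (rule lborel_pair.Fubini') measurable
    also have "\<dots> = (\<integral>\<^sup>+ \<xi>. ennreal (norm \<xi> powr (2 * \<alpha>)) * E \<xi> \<partial>lborel)"
    proof (rule nn_integral_cong)
      fix \<xi> :: 'a
      have "(\<integral>\<^sup>+ s. ennreal (exp (- (s/4) * P \<xi>) * norm \<xi> powr (2 * \<alpha>)) * indicator {0..t} s \<partial>lborel)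
          = (\<integral>\<^sup>+ s. ennreal (norm \<xi> powr (2 * \<alpha>)) * (ennreal (exp (- (s/4) * P \<xi>)) * indicator {0..t} s) \<partial>lborel)"
        by (intro nn_integral_cong) (simp add: ennreal_mult mult_ac)
      also have "\<dots> = ennreal (norm \<xi> powr (2 * \<alpha>)) * E \<xi>"
        unfolding E_def by (rule nn_integral_cmult) measurable
      finally show "(\<integral>\<^sup>+ s. ennreal (exp (- (s/4) * P \<xi>) * norm \<xi> powr (2 * \<alpha>)) * indicator {0..t} s \<partial>lborel) = ennreal (norm \<xi> powr (2 * \<alpha>)) * E \<xi>" .
    qed
    also have "\<dots> \<le> (\<integral>\<^sup>+ \<xi>. ennreal t * ennreal (4 * indicator (cball (0::'a) 2) \<xi>) + ennreal (16 * (indicator {\<xi>. 1 \<le> norm \<xi>} \<xi> * norm \<xi> powr (- (4 - 2 * \<alpha>)))) \<partial>lborel)"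
      unfolding E_def by (rule nn_integral_mono) (rule E_bound[OF P0 Pbig a(1,2) t])
    also have "\<dots> = ennreal t * (4 * A1) + 16 * A2"
    proof -
      have "(\<integral>\<^sup>+ \<xi>. ennreal t * ennreal (4 * indicator (cball (0::'a) 2) \<xi>) + ennreal (16 * (indicator {\<xi>. 1 \<le> norm \<xi>} \<xi> * norm \<xi> powr (- (4 - 2 * \<alpha>)))) \<partial>lborel)
          = (\<integral>\<^sup>+ \<xi>. ennreal t * ennreal (4 * indicator (cball (0::'a) 2) \<xi>) \<partial>lborel) + (\<integral>\<^sup>+ \<xi>. ennreal (16 * (indicator {\<xi>::'a. 1 \<le> norm \<xi>} \<xi> * norm \<xi> powr (- (4 - 2 * \<alpha>)))) \<partial>lborel)"
        by (rule nn_integral_add) measurable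
      also have "(\<integral>\<^sup>+ \<xi>. ennreal t * ennreal (4 * indicator (cball (0::'a) 2) \<xi>) \<partial>lborel) = ennreal t * (4 * A1)"
      proof -
        have "(\<integral>\<^sup>+ \<xi>. ennreal t * ennreal (4 * indicator (cball (0::'a) 2) \<xi>) \<partial>lborel) = (\<integral>\<^sup>+ \<xi>. (ennreal t * 4) * indicator (cball (0::'a) 2) \<xi> \<partial>lborel)"
          by (intro nn_integral_cong) (simp add: ennreal_mult ennreal_indicator mult_ac)
        also have "\<dots> = (ennreal t * 4) * A1" unfolding A1_def
          by (subst nn_integral_cmult) (simp_all)
        finally show ?thesis by (simp add: mult_ac)
      qed
      also have "(\<integral>\<^sup>+ \<xi>. ennreal (16 * (indicator {\<xi>::'a. 1 \<le> norm \<xi>} \<xi> * norm \<xi> powr (- (4 - 2 * \<alpha>)))) \<partial>lborel) = 16 * A2"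
      proof -
        have "(\<integral>\<^sup>+ \<xi>. ennreal (16 * (indicator {\<xi>::'a. 1 \<le> norm \<xi>} \<xi> * norm \<xi> powr (- (4 - 2 * \<alpha>)))) \<partial>lborel)
            = (\<integral>\<^sup>+ \<xi>. 16 * ennreal (indicator {\<xi>::'a. 1 \<le> norm \<xi>} \<xi> * norm \<xi> powr (- (4 - 2 * \<alpha>))) \<partial>lborel)"
          by (intro nn_integral_cong) (simp add: ennreal_mult)
        also have "\<dots> = 16 * A2" unfolding A2_def by (rule nn_integral_cmult) measurable
        finally show ?thesis .
      qed
      finally show ?thesis .
    qed
    finally have H: "(\<integral>\<^sup>+ s. (\<integral>\<^sup>+ \<xi>. ennreal (exp (- (s/4) * P \<xi>) * norm \<xi> powr (2 * \<alpha>)) * indicator {0..t} s \<partial>lborel) \<partial>lborel) \<le> ennreal t * (4 * A1) + 16 * A2" .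
    have "(\<integral>\<^sup>+ s \<in> {0..t}. (\<integral>\<^sup>+ x. ennreal (((2 * pi) powr (- real DIM('a)) * (\<integral>\<xi>. exp (- (s/8) * P \<xi>) * cos (\<xi> \<bullet> x) \<partial>lborel)
            - (2 * pi) powr (- real DIM('a)) * (\<integral>\<xi>. exp (- (s/8) * P \<xi>) * cos (\<xi> \<bullet> (x + z)) \<partial>lborel))\<^sup>2) \<partial>lborel) \<partial>lborel)
        \<le> ennreal B * (ennreal t * (4 * A1) + 16 * A2)"
      by (rule order_trans[OF L1 mult_left_mono[OF H]]) simp
    also have "ennreal B * (ennreal t * (4 * A1) + 16 * A2) = ennreal (B * (t * (4 * a1) + 16 * a2))"
    proof -
      have e1: "ennreal (t * (4 * a1)) = ennreal t * (4 * ennreal a1)"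
        using t a1 by (simp add: ennreal_mult)
      have e2: "ennreal (16 * a2) = 16 * ennreal a2"
        using a2 by (simp add: ennreal_mult)
      have e3: "ennreal (t * (4 * a1) + 16 * a2) = ennreal (t * (4 * a1)) + ennreal (16 * a2)"
        using t a1 a2 by (intro ennreal_plus) auto
      have e4: "ennreal (B * (t * (4 * a1) + 16 * a2)) = ennreal B * ennreal (t * (4 * a1) + 16 * a2)"
        using t a1 a2 B0 by (intro ennreal_mult) auto
      show ?thesis unfolding e4 e3 e1 e2 a1(2) a2(2) ..
    qed
    also have "\<dots> \<le> ennreal (C * norm z powr (2 * \<alpha>) * max 1 (t / 4))"
    proof (rule ennreal_leI)
      have "t * (4 * a1) + 16 * a2 \<le> (16 * a1 + 16 * a2 + 1/4) * max 1 (t / 4)"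
      proof -
        have "t * (4 * a1) = 16 * a1 * (t/4)" by simp
        also have "\<dots> \<le> 16 * a1 * max 1 (t/4)" using a1 by (intro mult_left_mono) auto
        finally have 1: "t * (4 * a1) \<le> 16 * a1 * max 1 (t/4)" .
        have 2: "16 * a2 \<le> 16 * a2 * max 1 (t/4)" using a2 by (simp add: mult_le_cancel_left1)
        have 3: "0 \<le> 1/4 * max 1 (t/4)" by simp
        show ?thesis using 1 2 3 by (simp only: distrib_right)
      qed
      then have "B * (t * (4 * a1) + 16 * a2) \<le> B * ((16 * a1 + 16 * a2 + 1/4) * max 1 (t / 4))"
        using B0 by (rule mult_left_mono)
      also have "\<dots> = C * norm z powr (2 * \<alpha>) * max 1 (t / 4)"
        by (simp add: B_def C_def algebra_simps)
      finally show "B * (t * (4 * a1) + 16 * a2) \<le> C * norm z powr (2 * \<alpha>) * max 1 (t / 4)" .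
    qed
    finally show ?thesis .
  qed
  show ?thesis using C0 main by blast
qed


theorem lemma3p3:
  fixes \<alpha> :: real
  assumes "alpha_range DIM('a::euclidean_space) \<alpha>"
  shows "(\<exists>C>0. \<forall>t>0. \<forall>z::'a.
            (\<integral>\<^sup>+ s \<in> {0..t}. (\<integral>\<^sup>+ x. ennreal ((K_LKS s x - K_LKS s (x + z))\<^sup>2) \<partial>lborel) \<partial>lborel)
              \<le> ennreal (C * norm z powr (2 * \<alpha>) * max 1 (t / 4)))
       \<and> (\<exists>C>0. \<forall>t>0. \<forall>z::'a.
            (\<integral>\<^sup>+ s \<in> {0..t}. (\<integral>\<^sup>+ x. ennreal ((K_SFO s x - K_SFO s (x + z))\<^sup>2) \<partial>lborel) \<partial>lborel)
              \<le> ennreal (C * norm z powr (2 * \<alpha>) * max 1 (t / 4)))"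
proof -
  have a: "0 < \<alpha>" "\<alpha> \<le> 1" "real DIM('a) < 4 - 2 * \<alpha>"
    using assms unfolding alpha_range_def by auto
  have L: "\<exists>C>0. \<forall>t>0. \<forall>z::'a.
            (\<integral>\<^sup>+ s \<in> {0..t}. (\<integral>\<^sup>+ x. ennreal ((K_LKS s x - K_LKS s (x + z))\<^sup>2) \<partial>lborel) \<partial>lborel)
              \<le> ennreal (C * norm z powr (2 * \<alpha>) * max 1 (t / 4))"
    unfolding K_LKS_def
  proof (rule main_generic[where P="\<lambda>\<xi>::'a. (-2 + (norm \<xi>)\<^sup>2)\<^sup>2", OF _ _ _ _ a])
    show "(\<lambda>\<xi>::'a. (-2 + (norm \<xi>)\<^sup>2)\<^sup>2) \<in> borel_measurable borel" by measurable
    show "\<And>\<xi>::'a. 0 \<le> (-2 + (norm \<xi>)\<^sup>2)\<^sup>2" by simp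
    show "(norm \<xi>)\<^sup>2 - 9/2 \<le> (-2 + (norm \<xi>)\<^sup>2)\<^sup>2" for \<xi> :: 'a
    proof -
      have "0 \<le> ((norm \<xi>)\<^sup>2 - 5/2)\<^sup>2" by simp
      then show ?thesis by (simp add: power2_eq_square algebra_simps)
    qed
    show "(norm \<xi>)^4 / 4 \<le> (-2 + (norm \<xi>)\<^sup>2)\<^sup>2" if "2 \<le> norm \<xi>" for \<xi> :: 'a
    proof -
      have u: "4 \<le> (norm \<xi>)\<^sup>2" using that power_mono[of 2 "norm \<xi>" 2] by simp
      then have "(norm \<xi>)\<^sup>2 / 2 \<le> -2 + (norm \<xi>)\<^sup>2" by simp
      then have "((norm \<xi>)\<^sup>2 / 2)\<^sup>2 \<le> (-2 + (norm \<xi>)\<^sup>2)\<^sup>2" by (rule power_mono) simp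
      then show ?thesis by (simp add: power_divide power2_eq_square[symmetric] power_mult[symmetric])
    qed
  qed
  have S: "\<exists>C>0. \<forall>t>0. \<forall>z::'a.
            (\<integral>\<^sup>+ s \<in> {0..t}. (\<integral>\<^sup>+ x. ennreal ((K_SFO s x - K_SFO s (x + z))\<^sup>2) \<partial>lborel) \<partial>lborel)
              \<le> ennreal (C * norm z powr (2 * \<alpha>) * max 1 (t / 4))"
    unfolding K_SFO_def
  proof (rule main_generic[where P="\<lambda>\<xi>::'a. (norm \<xi>) ^ 4", OF _ _ _ _ a])
    show "(\<lambda>\<xi>::'a. (norm \<xi>) ^ 4) \<in> borel_measurable borel" by measurable
    show "\<And>\<xi>::'a. 0 \<le> (norm \<xi>) ^ 4" by simp
    show "(norm \<xi>)\<^sup>2 - 9/2 \<le> (norm \<xi>) ^ 4" for \<xi> :: 'a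
    proof -
      have "0 \<le> ((norm \<xi>)\<^sup>2 - 1/2)\<^sup>2" by simp
      then show ?thesis by (simp add: power2_eq_square algebra_simps power4_eq_xxxx)
    qed
    show "(norm \<xi>)^4 / 4 \<le> (norm \<xi>) ^ 4" if "2 \<le> norm \<xi>" for \<xi> :: 'a
      by simp
  qed
  show ?thesis using L S by blast
qed

end
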